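(* Let $n,m$ be positive integers and let $(\mathbf{x}_i,\mathbf{y}_i)_{i=1}^m$ be i.i.d. samples from a zero-mean jointly Gaussian distribution on $\mathbb{R}^n\times\mathbb{R}^n$ with $\mathbb{E}[\mathbf{x}\mathbf{x}^\top]=\mathbb{E}[\mathbf{y}\mathbf{y}^\top]=\mathbf{I}_n$ and $\boldsymbol{\Sigma}_{xy}=\mathbb{E}[\mathbf{x}\mathbf{y}^\top]=\rho\mathbf{u}\mathbf{v}^\top$, where $\rho\in(0,1)$, $\|\mathbf{u}\|_2=\|\mathbf{v}\|_2=1$, $\|\mathbf{u}\|_0\le k_{\mathbf{u}}$, $\|\mathbf{v}\|_0\le k_{\mathbf{v}}$. Condition on the event $\mathcal{E}$ (defined in the context). Let $k_{\max}=\max(k_{\mathbf{u}},k_{\mathbf{v}})$ and, for each $t$, let $t_{\mathbf{u}}=\min(t,k_{\mathbf{u}})$, $t_{\mathbf{v}}=\min(t,k_{\mathbf{v}})$. Let $\gamma\in(0,1)$. There is an absolute constant $C>0$ such that, with $C_1=C\frac{(1+\rho)^2}{\rho^2\gamma^2(1-\sqrt{\gamma})^2}$ and $C_2=C\frac{1+\rho}{\rho\gamma}$, if $$m\ \ge\ C_1\max_{1\le t\le k_{\max}}(t_{\mathbf{u}}+t_{\mathbf{v}})\,s_{\mathbf{u}}(t_{\mathbf{u}})\,s_{\mathbf{v}}(t_{\mathbf{v}})\log n,$$ then the outputs $\hat{\mathbf{u}}^{(k_{\max})},\hat{\mathbf{v}}^{(k_{\max})}$ of the Bi-SEP algorithm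 satisfy $$\sin\angle(\hat{\mathbf{u}}^{(k_{\max})},\mathbf{u})\le\sqrt{1-\gamma}+C_2\sqrt{\frac{(k_{\mathbf{u}}+k_{\mathbf{v}})\log n}{m}},\qquad \sin\angle(\hat{\mathbf{v}}^{(k_{\max})},\mathbf{v})\le\sqrt{1-\gamma}+C_2\sqrt{\frac{(k_{\mathbf{u}}+k_{\mathbf{v}})\log n}{m}}.$$
   Context: Sample cross-covariance: $\widehat{\boldsymbol{\Sigma}}_{xy}=\frac1m\sum_{i=1}^m\mathbf{x}_i\mathbf{y}_i^\top$; noise matrix $\mathbf{W}=\widehat{\boldsymbol{\Sigma}}_{xy}-\rho\mathbf{u}\mathbf{v}^\top$. For $S_1,S_2\subset[n]$, $\mathbf{W}_{S_1,S_2}$ is the submatrix with rows $S_1$, columns $S_2$; $\|\cdot\|_2$ is the spectral norm. The event $\mathcal{E}$ is: for all $S_1,S_2\subset[n]$ with $|S_1|\le k_{\mathbf{u}}$, $|S_2|\le k_{\mathbf{v}}$, $\|\mathbf{W}_{S_1,S_2}\|_2\le C\sqrt{((|S_1|+|S_2|)\log n+c'\log n)/m}$, for fixed absolute constants $C,c'>0$. Structure functions: with $u_{(i)}$ the $i$-th largest entry of $\mathbf{u}$ in absolute value, $s_{\mathbf{u}}(p)=(\sum_{i=1}^p u_{(i)}^2)^{-1}$ and similarly $s_{\mathbf{v}}(q)=(\sum_{j=1}^q v_{(j)}^2)^{-1}$, for $p,q\in[n]$. $\sin\angle(\mathbf{a},\mathbf{b})=\sqrt{1-\langle\mathbf{a},\mathbf{b}\rangle^2}$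 for unit vectors. Bi-SEP algorithm (input $\widehat{\boldsymbol{\Sigma}}_{xy},k_{\mathbf{u}},k_{\mathbf{v}}$): pick $(i_0,j_0)=\arg\max_{i,j}|(\widehat{\boldsymbol{\Sigma}}_{xy})_{ij}|$, set $S_{\mathbf{u}}^{(0)}=\{i_0\}$, $S_{\mathbf{v}}^{(0)}=\{j_0\}$. For $t=0,\dots,k_{\max}-1$: let $(\hat{\mathbf{u}}^{(t)},\hat{\mathbf{v}}^{(t)})$ be the unit-norm leading left/right singular vectors of the submatrix $(\widehat{\boldsymbol{\Sigma}}_{xy})_{S_{\mathbf{u}}^{(t)},S_{\mathbf{v}}^{(t)}}$, zero-padded to $\mathbb{R}^n$; set $\mathbf{r}_{\mathbf{u}}=\widehat{\boldsymbol{\Sigma}}_{xy}\hat{\mathbf{v}}^{(t)}$, $\mathbf{r}_{\mathbf{v}}=\widehat{\boldsymbol{\Sigma}}_{xy}^\top\hat{\mathbf{u}}^{(t)}$; let $S_{\mathbf{u}}^{(t+1)}$ be the indices of the $\min(t+1,k_{\mathbf{u}})$ largest entries of $|\mathbf{r}_{\mathbf{u}}|$ and $S_{\mathbf{v}}^{(t+1)}$ the indices of the $\min(t+1,k_{\mathbf{v}})$ largest entries of $|\mathbf{r}_{\mathbf{v}}|$. Output: the unit-norm leading singular pair $(\hat{\mathbf{u}}^{(k_{\max})},\hat{\mathbf{v}}^{(k_{\max})})$ of $(\widehat{\boldsymbol{\Sigma}}_{xy})_{S_{\mathbf{u}}^{(k_{\max})},S_{\mathbf{v}}^{(k_{\max})}}$,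 zero-padded to $\mathbb{R}^n$. *)

theory Defs
  imports Complex_Main
begin

(* Vectors in R^n are functions nat => real, only the indices 0..<n matter;
   n x n matrices are functions nat => nat => real. *)

definition vinner :: "nat \<Rightarrow> (nat \<Rightarrow> real) \<Rightarrow> (nat \<Rightarrow> real) \<Rightarrow> real" where
  "vinner n a b = (\<Sum>i<n. a i * b i)"

definition vnorm :: "nat \<Rightarrow> (nat \<Rightarrow> real) \<Rightarrow> real" where
  "vnorm n a = sqrt (\<Sum>i<n. (a i)\<^sup>2)"

definition l0norm :: "nat \<Rightarrow> (nat \<Rightarrow> real) \<Rightarrow> nat" where
  "l0norm n a = card {i. i < n \<and> a i \<noteq> 0}"

(* sin of the angle between unit vectors *)
definition sin_angle :: "nat \<Rightarrow> (nat \<Rightarrow> real) \<Rightarrow> (nat \<Rightarrow> real) \<Rightarrow> real" where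
  "sin_angle n a b = sqrt (1 - (vinner n a b)\<^sup>2)"

definition sample_cov :: "nat \<Rightarrow> nat \<Rightarrow> (nat \<Rightarrow> nat \<Rightarrow> real) \<Rightarrow> (nat \<Rightarrow> nat \<Rightarrow> real)
    \<Rightarrow> nat \<Rightarrow> nat \<Rightarrow> real" where
  "sample_cov n m xs ys = (\<lambda>i j. (1 / real m) * (\<Sum>l<m. xs l i * ys l j))"

definition spec_norm_sub :: "(nat \<Rightarrow> nat \<Rightarrow> real) \<Rightarrow> nat set \<Rightarrow> nat set \<Rightarrow> real" where
  "spec_norm_sub M S1 S2 =
     Sup {sqrt (\<Sum>i\<in>S1. (\<Sum>j\<in>S2. M i j * x j)\<^sup>2) | x. (\<Sum>j\<in>S2. (x j)\<^sup>2) \<le> 1}"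

definition event_E :: "real \<Rightarrow> real \<Rightarrow> nat \<Rightarrow> nat \<Rightarrow> nat \<Rightarrow> nat \<Rightarrow> (nat \<Rightarrow> nat \<Rightarrow> real) \<Rightarrow> bool" where
  "event_E CE c' n m ku kv W \<longleftrightarrow>
     (\<forall>S1 S2. S1 \<subseteq> {..<n} \<longrightarrow> S2 \<subseteq> {..<n} \<longrightarrow> card S1 \<le> ku \<longrightarrow> card S2 \<le> kv \<longrightarrow>
        spec_norm_sub W S1 S2
          \<le> CE * sqrt (((real (card S1) + real (card S2)) * ln (real n) + c' * ln (real n)) / real m))"

definition abs_sorted_desc :: "nat \<Rightarrow> (nat \<Rightarrow> real) \<Rightarrow> real list" where
  "abs_sorted_desc n u = rev (sort (map (\<lambda>i. \<bar>u i\<bar>) [0..<n]))"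

definition struct_fun :: "nat \<Rightarrow> (nat \<Rightarrow> real) \<Rightarrow> nat \<Rightarrow> real" where
  "struct_fun n u p = inverse (sum_list (map (\<lambda>x. x\<^sup>2) (take p (abs_sorted_desc n u))))"

definition leading_sing_pair ::
  "(nat \<Rightarrow> nat \<Rightarrow> real) \<Rightarrow> nat set \<Rightarrow> nat set \<Rightarrow> (nat \<Rightarrow> real) \<Rightarrow> (nat \<Rightarrow> real) \<Rightarrow> bool" where
  "leading_sing_pair M S1 S2 a b \<longleftrightarrow>
     (\<forall>i. i \<notin> S1 \<longrightarrow> a i = 0) \<and> (\<forall>j. j \<notin> S2 \<longrightarrow> b j = 0) \<and>
     (\<Sum>i\<in>S1. (a i)\<^sup>2) = 1 \<and> (\<Sum>j\<in>S2. (b j)\<^sup>2) = 1 \<and>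
     (\<forall>i\<in>S1. (\<Sum>j\<in>S2. M i j * b j) = spec_norm_sub M S1 S2 * a i) \<and>
     (\<forall>j\<in>S2. (\<Sum>i\<in>S1. M i j * a i) = spec_norm_sub M S1 S2 * b j)"

(* S is a set of indices of the k largest entries of |r| (any tie-breaking) *)
definition top_k_set :: "nat \<Rightarrow> (nat \<Rightarrow> real) \<Rightarrow> nat \<Rightarrow> nat set \<Rightarrow> bool" where
  "top_k_set n r k S \<longleftrightarrow>
     S \<subseteq> {..<n} \<and> card S = k \<and> (\<forall>i\<in>S. \<forall>j\<in>{..<n} - S. \<bar>r j\<bar> \<le> \<bar>r i\<bar>)"

(* Su, Sv, uh, vh form a run of Bi-SEP on input M, ku, kv (any tie-breaking / any
   choice of leading singular pair); the output is (uh kmax, vh kmax). *)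
definition bisep_run ::
  "nat \<Rightarrow> (nat \<Rightarrow> nat \<Rightarrow> real) \<Rightarrow> nat \<Rightarrow> nat \<Rightarrow> (nat \<Rightarrow> nat set) \<Rightarrow> (nat \<Rightarrow> nat set)
     \<Rightarrow> (nat \<Rightarrow> nat \<Rightarrow> real) \<Rightarrow> (nat \<Rightarrow> nat \<Rightarrow> real) \<Rightarrow> bool" where
  "bisep_run n M ku kv Su Sv uh vh \<longleftrightarrow>
     (\<exists>i0 j0. i0 < n \<and> j0 < n \<and> (\<forall>i<n. \<forall>j<n. \<bar>M i j\<bar> \<le> \<bar>M i0 j0\<bar>) \<and>
        Su 0 = {i0} \<and> Sv 0 = {j0}) \<and>
     (\<forall>t \<le> max ku kv. leading_sing_pair M (Su t) (Sv t) (uh t) (vh t)) \<and>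
     (\<forall>t < max ku kv.
        top_k_set n (\<lambda>i. \<Sum>j<n. M i j * vh t j) (min (t + 1) ku) (Su (Suc t)) \<and>
        top_k_set n (\<lambda>j. \<Sum>i<n. M i j * uh t i) (min (t + 1) kv) (Sv (Suc t)))"

end

theory Submission
  imports Defs "HOL-Analysis.L2_Norm" "HOL-Library.Multiset"
begin


definition Mv :: "(nat\<Rightarrow>nat\<Rightarrow>real) \<Rightarrow> nat set \<Rightarrow> (nat\<Rightarrow>real) \<Rightarrow> nat \<Rightarrow> real" where
  "Mv M Y b i = (\<Sum>j\<in>Y. M i j * b j)"

definition TT :: "(nat\<Rightarrow>nat\<Rightarrow>real) \<Rightarrow> nat\<Rightarrow>nat\<Rightarrow>real" where
  "TT M = (\<lambda>i j. M j i)"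

definition noise :: "(nat\<Rightarrow>nat\<Rightarrow>real) \<Rightarrow> nat set \<Rightarrow> nat set \<Rightarrow> real \<Rightarrow> bool" where
  "noise W X Y e \<longleftrightarrow> (\<forall>b. (\<Sum>j\<in>Y. (b j)^2) \<le> 1 \<longrightarrow> L2_set (Mv W Y b) X \<le> e)"

definition lsp :: "(nat\<Rightarrow>nat\<Rightarrow>real) \<Rightarrow> nat set \<Rightarrow> nat set \<Rightarrow> (nat\<Rightarrow>real) \<Rightarrow> (nat\<Rightarrow>real) \<Rightarrow> real \<Rightarrow> bool" where
  "lsp M S1 S2 a b \<sigma> \<longleftrightarrow> (\<forall>i. i\<notin>S1 \<longrightarrow> a i = 0) \<and> (\<forall>j. j\<notin>S2 \<longrightarrow> b j = 0) \<and>
     (\<Sum>i\<in>S1. (a i)^2) = 1 \<and> (\<Sum>j\<in>S2. (b j)^2) = 1 \<and>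
     (\<forall>i\<in>S1. Mv M S2 b i = \<sigma> * a i) \<and> (\<forall>j\<in>S2. Mv (TT M) S1 a j = \<sigma> * b j) \<and>
     (\<forall>a' b'. (\<Sum>i\<in>S1. (a' i)^2) \<le> 1 \<longrightarrow> (\<Sum>j\<in>S2. (b' j)^2) \<le> 1 \<longrightarrow>
        (\<Sum>i\<in>S1. a' i * Mv M S2 b' i) \<le> \<sigma>)"

lemma TT_TT[simp]: "TT (TT M) = M" by (simp add: TT_def)

lemma L2_sq: "(L2_set f A)^2 = (\<Sum>i\<in>A. (f i)^2)"
  unfolding L2_set_def by (simp add: sum_nonneg)

lemma CS: "\<bar>\<Sum>i\<in>A. f i * g i\<bar> \<le> L2_set f A * L2_set g A"
proof -
  have "\<bar>\<Sum>i\<in>A. f i * g i\<bar> \<le> (\<Sum>i\<in>A. \<bar>f i * g i\<bar>)" by (rule sum_abs)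
  also have "\<dots> = (\<Sum>i\<in>A. \<bar>f i\<bar> * \<bar>g i\<bar>)" by (simp add: abs_mult)
  also have "\<dots> \<le> L2_set f A * L2_set g A" by (rule L2_set_mult_ineq)
  finally show ?thesis .
qed

lemma CS': "(\<Sum>i\<in>A. f i * g i) \<le> L2_set f A * L2_set g A"
  using CS[of f g A] by linarith

lemma L2_le1: "(\<Sum>i\<in>A. (f i)^2) \<le> 1 \<Longrightarrow> L2_set f A \<le> 1"
  unfolding L2_set_def by simp

lemma L2_eq1: "(\<Sum>i\<in>A. (f i)^2) = 1 \<Longrightarrow> L2_set f A = 1"
  unfolding L2_set_def by simp

lemma L2_minus: "L2_set (\<lambda>i. f i - g i) A \<le> L2_set f A + L2_set g A"
proof -
  have "L2_set (\<lambda>i. f i + (- g i)) A \<le> L2_set f A + L2_set (\<lambda>i. - g i) A"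
    by (rule L2_set_triangle_ineq)
  moreover have "L2_set (\<lambda>i. - g i) A = L2_set g A" unfolding L2_set_def by simp
  ultimately show ?thesis by simp
qed

lemma L2_scale: "L2_set (\<lambda>i. c * f i) A = \<bar>c\<bar> * L2_set f A"
proof -
  have "L2_set (\<lambda>i. c * f i) A = L2_set (\<lambda>i. \<bar>c\<bar> * f i) A"
    unfolding L2_set_def by (simp add: power_mult_distrib)
  also have "\<dots> = \<bar>c\<bar> * L2_set f A" using L2_set_right_distrib[of "\<bar>c\<bar>" f A] by simp
  finally show ?thesis .
qed

lemma spec_upper:
  assumes "finite S1" "finite S2" "(\<Sum>j\<in>S2. (x j)^2) \<le> 1"
  shows "L2_set (Mv M S2 x) S1 \<le> spec_norm_sub M S1 S2"
proof -
  let ?B = "sqrt (\<Sum>i\<in>S1. \<Sum>j\<in>S2. (M i j)^2)"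
  have bd: "bdd_above {sqrt (\<Sum>i\<in>S1. (\<Sum>j\<in>S2. M i j * x j)\<^sup>2) | x. (\<Sum>j\<in>S2. (x j)\<^sup>2) \<le> 1}"
  proof (rule bdd_aboveI, clarify)
    fix y :: "nat \<Rightarrow> real" assume y: "(\<Sum>j\<in>S2. (y j)\<^sup>2) \<le> 1"
    have "(\<Sum>j\<in>S2. M i j * y j)\<^sup>2 \<le> (\<Sum>j\<in>S2. (M i j)^2)" for i
    proof -
      have "\<bar>\<Sum>j\<in>S2. M i j * y j\<bar> \<le> L2_set (M i) S2 * L2_set y S2" by (rule CS)
      also have "\<dots> \<le> L2_set (M i) S2" using L2_le1[OF y]
        by (simp add: mult_left_le)
      finally have "\<bar>\<Sum>j\<in>S2. M i j * y j\<bar> \<le> L2_set (M i) S2" .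
      hence "(\<Sum>j\<in>S2. M i j * y j)\<^sup>2 \<le> (L2_set (M i) S2)^2"
        by (metis abs_ge_zero power2_abs power_mono)
      thus ?thesis by (simp add: L2_sq)
    qed
    hence "(\<Sum>i\<in>S1. (\<Sum>j\<in>S2. M i j * y j)\<^sup>2) \<le> (\<Sum>i\<in>S1. \<Sum>j\<in>S2. (M i j)^2)"
      by (rule sum_mono)
    thus "sqrt (\<Sum>i\<in>S1. (\<Sum>j\<in>S2. M i j * y j)\<^sup>2) \<le> ?B" by simp
  qed
  have "L2_set (Mv M S2 x) S1 = sqrt (\<Sum>i\<in>S1. (\<Sum>j\<in>S2. M i j * x j)\<^sup>2)"
    unfolding L2_set_def Mv_def by simp
  also have "\<dots> \<le> spec_norm_sub M S1 S2"
    unfolding spec_norm_sub_def using assms(3) by (intro cSup_upper[OF _ bd]) blast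
  finally show ?thesis .
qed

lemma Mv_T_swap: "(\<Sum>j\<in>S2. b j * Mv (TT M) S1 a j) = (\<Sum>i\<in>S1. a i * Mv M S2 b i)"
  unfolding Mv_def TT_def by (simp add: sum_distrib_left mult_ac sum.swap[of _ S2 S1])

lemma noise_nonneg: "noise W X Y e \<Longrightarrow> 0 \<le> e"
proof -
  assume "noise W X Y e"
  hence "L2_set (Mv W Y (\<lambda>_. 0)) X \<le> e" unfolding noise_def by simp
  thus ?thesis using L2_set_nonneg order_trans by blast
qed

lemma noise_T:
  assumes "finite X" "finite Y" "noise W X Y e"
  shows "noise (TT W) Y X e"
  unfolding noise_def
proof (intro allI impI)
  fix a :: "nat \<Rightarrow> real" assume a: "(\<Sum>j\<in>X. (a j)^2) \<le> 1"
  let ?g = "Mv (TT W) X a"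
  have e0: "0 \<le> e" using noise_nonneg[OF assms(3)] .
  show "L2_set ?g Y \<le> e"
  proof (cases "L2_set ?g Y = 0")
    case True thus ?thesis using e0 by simp
  next
    case False
    hence gp: "L2_set ?g Y > 0" using L2_set_nonneg[of ?g Y] by linarith
    define b where "b = (\<lambda>j. ?g j / L2_set ?g Y)"
    have "(\<Sum>j\<in>Y. (b j)^2) = (\<Sum>j\<in>Y. (?g j)^2) / (L2_set ?g Y)^2"
      unfolding b_def by (simp add: power_divide sum_divide_distrib)
    also have "\<dots> = 1" using gp by (simp add: L2_sq[symmetric])
    finally have b1: "(\<Sum>j\<in>Y. (b j)^2) = 1" .
    have "(\<Sum>j\<in>Y. b j * ?g j) = (\<Sum>j\<in>Y. (?g j)^2) / L2_set ?g Y"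
      unfolding b_def by (simp add: power2_eq_square sum_divide_distrib)
    also have "\<dots> = (L2_set ?g Y)^2 / L2_set ?g Y" by (simp add: L2_sq)
    also have "\<dots> = L2_set ?g Y" using gp by (simp add: power2_eq_square)
    finally have "L2_set ?g Y = (\<Sum>j\<in>Y. b j * ?g j)" by simp
    also have "\<dots> = (\<Sum>i\<in>X. a i * Mv W Y b i)" by (rule Mv_T_swap)
    also have "\<dots> \<le> L2_set a X * L2_set (Mv W Y b) X" by (rule CS')
    also have "\<dots> \<le> 1 * e"
      using assms(3) b1 L2_le1[OF a] unfolding noise_def
      by (intro mult_mono) auto
    finally show ?thesis by simp
  qed
qed


lemma lsp_of_leading:
  assumes "leading_sing_pair M S1 S2 a b" "finite S1" "finite S2"
  shows "lsp M S1 S2 a b (spec_norm_sub M S1 S2)"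
proof -
  have t: "(\<Sum>i\<in>S1. a' i * Mv M S2 b' i) \<le> spec_norm_sub M S1 S2"
    if a': "(\<Sum>i\<in>S1. (a' i)^2) \<le> 1" and b': "(\<Sum>j\<in>S2. (b' j)^2) \<le> 1" for a' b'
  proof -
    have "(\<Sum>i\<in>S1. a' i * Mv M S2 b' i) \<le> L2_set a' S1 * L2_set (Mv M S2 b') S1" by (rule CS')
    also have "\<dots> \<le> 1 * spec_norm_sub M S1 S2"
      using L2_le1[OF a'] spec_upper[OF assms(2,3) b'] by (intro mult_mono) auto
    finally show ?thesis by simp
  qed
  show ?thesis using assms(1) t unfolding lsp_def leading_sing_pair_def Mv_def TT_def by auto
qed

lemma lsp_T:
  assumes "lsp M S1 S2 a b \<sigma>"
  shows "lsp (TT M) S2 S1 b a \<sigma>"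
proof -
  have "(\<Sum>j\<in>S2. a' j * Mv (TT M) S1 b' j) \<le> \<sigma>"
    if "(\<Sum>j\<in>S2. (a' j)^2) \<le> 1" "(\<Sum>i\<in>S1. (b' i)^2) \<le> 1" for a' b'
    using assms that unfolding Mv_T_swap lsp_def by auto
  thus ?thesis using assms unfolding lsp_def by auto
qed

lemma core:
  fixes f :: "nat \<Rightarrow> real"
  assumes "finite X" "finite Y" "card X \<le> card Y" "\<forall>x\<in>X. \<forall>y\<in>Y. f x \<le> f y" "\<forall>y\<in>Y. 0 \<le> f y"
  shows "sum f X \<le> sum f Y"
proof (cases "X = {}")
  case True thus ?thesis using assms(5) by (simp add: sum_nonneg)
next
  case False
  hence Yne: "Y \<noteq> {}" using assms(1,3) card_gt_0_iff[of X] by auto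
  define m where "m = Min (f ` Y)"
  have xm: "\<forall>x\<in>X. f x \<le> m" unfolding m_def using assms(2,4) Yne by auto
  have ym: "\<forall>y\<in>Y. m \<le> f y" unfolding m_def using assms(2) by auto
  have m0: "0 \<le> m" unfolding m_def using assms(2,5) Yne by auto
  have "sum f X \<le> of_nat (card X) * m" using sum_bounded_above[of X f m] xm by auto
  also have "\<dots> \<le> of_nat (card Y) * m" using assms(3) m0 by (intro mult_right_mono) auto
  also have "\<dots> \<le> sum f Y" using sum_bounded_below[of Y m f] ym by auto
  finally show ?thesis .
qed

lemma topk:
  fixes f :: "nat \<Rightarrow> real"
  assumes "finite A" "S \<subseteq> A" "T \<subseteq> A" "card T \<le> card S"
    "\<forall>i\<in>S. \<forall>j\<in>A-S. f j \<le> f i" "\<forall>i\<in>A. 0 \<le> f i"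
  shows "sum f T \<le> sum f S"
proof -
  have fS: "finite S" "finite T" using finite_subset[OF assms(2) assms(1)] finite_subset[OF assms(3) assms(1)] by auto
  have c1: "card T = card (T \<inter> S) + card (T - S)"
    using fS by (metis Int_Diff_Un Int_Diff_disjoint card_Un_disjoint finite_Diff finite_Int)
  have c2: "card S = card (T \<inter> S) + card (S - T)"
    using fS by (metis Int_Diff_Un Int_Diff_disjoint card_Un_disjoint finite_Diff finite_Int Int_commute)
  have "sum f (T - S) \<le> sum f (S - T)"
    using fS assms c1 c2 by (intro core) auto
  moreover have "sum f T = sum f (T \<inter> S) + sum f (T - S)" using fS by (metis sum.Int_Diff)
  moreover have "sum f S = sum f (T \<inter> S) + sum f (S - T)" using fS by (metis sum.Int_Diff Int_commute)
  ultimately show ?thesis by linarith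
qed

lemma Mv_dec:
  assumes "\<forall>i j. M i j = \<rho> * u i * v j + W i j"
  shows "Mv M Y b i = \<rho> * u i * (\<Sum>j\<in>Y. v j * b j) + Mv W Y b i"
  unfolding Mv_def using assms by (simp add: algebra_simps sum.distrib sum_distrib_left)

lemma sum_restrict:
  fixes n :: nat and b f :: "nat \<Rightarrow> real"
  assumes "Y \<subseteq> {..<n}" "\<forall>j. j \<notin> Y \<longrightarrow> b j = 0"
  shows "(\<Sum>j<n. f j * b j) = (\<Sum>j\<in>Y. f j * b j)"
  by (rule sum.mono_neutral_right) (use assms in auto)

lemma L2_restrict:
  assumes "X \<subseteq> A" "finite A" "\<forall>j\<in>A-X. f j = 0"
  shows "L2_set f A = L2_set f X"
  unfolding L2_set_def using assms by (metis (no_types, lifting) power_zero_numeral sum.mono_neutral_right zero_power2)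



lemma corr:
  assumes dec: "\<forall>i j. M i j = \<rho> * u i * v j + W i j"
    and L: "lsp M S1 S2 a b \<sigma>" and f: "finite S1" "finite S2"
    and N: "noise W S1 S2 e" and rho: "0 < \<rho>"
  shows "\<rho> * L2_set u S1 * L2_set v S2 - 2*e \<le> \<rho> * \<bar>\<Sum>i\<in>S1. a i * u i\<bar> * \<bar>\<Sum>j\<in>S2. b j * v j\<bar>"
    and "\<bar>\<Sum>i\<in>S1. a i * u i\<bar> \<le> L2_set u S1"
    and "\<bar>\<Sum>j\<in>S2. b j * v j\<bar> \<le> L2_set v S2"
    and "\<rho> * L2_set u S1 * L2_set v S2 - e \<le> \<sigma>"
proof -
  have a1: "(\<Sum>i\<in>S1. (a i)^2) = 1" and b1: "(\<Sum>j\<in>S2. (b j)^2) = 1"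
    and eqa: "\<forall>i\<in>S1. Mv M S2 b i = \<sigma> * a i"
    and test: "\<And>a' b'. (\<Sum>i\<in>S1. (a' i)^2) \<le> 1 \<Longrightarrow> (\<Sum>j\<in>S2. (b' j)^2) \<le> 1 \<Longrightarrow>
        (\<Sum>i\<in>S1. a' i * Mv M S2 b' i) \<le> \<sigma>"
    using L unfolding lsp_def by auto
  have e0: "0 \<le> e" using noise_nonneg[OF N] .
  define p where "p = (\<Sum>i\<in>S1. a i * u i)"
  define q where "q = (\<Sum>j\<in>S2. b j * v j)"
  have "\<sigma> = (\<Sum>i\<in>S1. a i * (\<sigma> * a i))"
    using a1 by (simp add: power2_eq_square sum_distrib_left[symmetric] mult_ac)
  also have "\<dots> = (\<Sum>i\<in>S1. a i * Mv M S2 b i)" using eqa by simp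
  also have "\<dots> = (\<Sum>i\<in>S1. \<rho> * q * (a i * u i) + a i * Mv W S2 b i)"
    unfolding Mv_dec[OF dec] q_def by (intro sum.cong) (auto simp: algebra_simps)
  also have "\<dots> = \<rho> * q * p + (\<Sum>i\<in>S1. a i * Mv W S2 b i)"
    unfolding p_def by (simp add: sum.distrib sum_distrib_left)
  finally have sig: "\<sigma> = \<rho> * q * p + (\<Sum>i\<in>S1. a i * Mv W S2 b i)" .
  have "(\<Sum>i\<in>S1. a i * Mv W S2 b i) \<le> L2_set a S1 * L2_set (Mv W S2 b) S1" by (rule CS')
  also have "\<dots> \<le> e" using L2_eq1[OF a1] N b1 unfolding noise_def by simp
  finally have X: "(\<Sum>i\<in>S1. a i * Mv W S2 b i) \<le> e" .
  have "\<rho>*q*p \<le> \<bar>\<rho>*q*p\<bar>" by (rule abs_ge_self)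
  also have "\<dots> = \<rho> * \<bar>p\<bar> * \<bar>q\<bar>" using rho by (simp add: abs_mult)
  finally have up: "\<sigma> \<le> \<rho> * \<bar>p\<bar> * \<bar>q\<bar> + e" using sig X by linarith
  have low: "\<rho> * L2_set u S1 * L2_set v S2 - e \<le> \<sigma>"
  proof (cases "L2_set u S1 = 0 \<or> L2_set v S2 = 0")
    case True
    have "0 \<le> \<sigma>" using test[of "\<lambda>_. 0" "\<lambda>_. 0"] by (simp add: Mv_def)
    thus ?thesis using True e0 by auto
  next
    case False
    hence pu: "L2_set u S1 > 0" and pv: "L2_set v S2 > 0" using L2_set_nonneg[of u S1] L2_set_nonneg[of v S2] by linarith+
    define a' where "a' = (\<lambda>i. u i / L2_set u S1)"
    define b' where "b' = (\<lambda>j. v j / L2_set v S2)"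
    have sa: "(\<Sum>i\<in>S1. (a' i)^2) = 1" unfolding a'_def using pu
      by (simp add: power_divide sum_divide_distrib[symmetric] L2_sq[symmetric])
    have sb: "(\<Sum>j\<in>S2. (b' j)^2) = 1" unfolding b'_def using pv
      by (simp add: power_divide sum_divide_distrib[symmetric] L2_sq[symmetric])
    have "(\<Sum>i\<in>S1. a' i * u i) = (\<Sum>i\<in>S1. (u i)^2 / L2_set u S1)"
      unfolding a'_def by (intro sum.cong) (auto simp: power2_eq_square)
    also have "\<dots> = (\<Sum>i\<in>S1. (u i)^2) / L2_set u S1" by (simp add: sum_divide_distrib)
    also have "\<dots> = (L2_set u S1)^2 / L2_set u S1" by (simp add: L2_sq)
    also have "\<dots> = L2_set u S1" using pu by (simp add: power2_eq_square)
    finally have au: "(\<Sum>i\<in>S1. a' i * u i) = L2_set u S1" .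
    have "(\<Sum>j\<in>S2. v j * b' j) = (\<Sum>j\<in>S2. (v j)^2 / L2_set v S2)"
      unfolding b'_def by (intro sum.cong) (auto simp: power2_eq_square)
    also have "\<dots> = (\<Sum>j\<in>S2. (v j)^2) / L2_set v S2" by (simp add: sum_divide_distrib)
    also have "\<dots> = (L2_set v S2)^2 / L2_set v S2" by (simp add: L2_sq)
    also have "\<dots> = L2_set v S2" using pv by (simp add: power2_eq_square)
    finally have bv: "(\<Sum>j\<in>S2. v j * b' j) = L2_set v S2" .
    have "(\<Sum>i\<in>S1. a' i * Mv M S2 b' i) = (\<Sum>i\<in>S1. \<rho> * L2_set v S2 * (a' i * u i) + a' i * Mv W S2 b' i)"
      unfolding Mv_dec[OF dec] bv by (intro sum.cong) (auto simp: algebra_simps)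
    also have "\<dots> = \<rho> * L2_set v S2 * L2_set u S1 + (\<Sum>i\<in>S1. a' i * Mv W S2 b' i)"
      by (simp add: sum.distrib sum_distrib_left[symmetric] au)
    finally have ee: "(\<Sum>i\<in>S1. a' i * Mv M S2 b' i) = \<rho> * L2_set v S2 * L2_set u S1 + (\<Sum>i\<in>S1. a' i * Mv W S2 b' i)" .
    have "\<bar>\<Sum>i\<in>S1. a' i * Mv W S2 b' i\<bar> \<le> L2_set a' S1 * L2_set (Mv W S2 b') S1" by (rule CS)
    also have "\<dots> \<le> e" using L2_eq1[OF sa] N sb unfolding noise_def by simp
    finally have "\<bar>\<Sum>i\<in>S1. a' i * Mv W S2 b' i\<bar> \<le> e" .
    moreover have "(\<Sum>i\<in>S1. a' i * Mv M S2 b' i) \<le> \<sigma>" using test sa sb by simp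
    ultimately show ?thesis using ee by (simp add: mult_ac)
  qed
  show "\<rho> * L2_set u S1 * L2_set v S2 - 2*e \<le> \<rho> * \<bar>\<Sum>i\<in>S1. a i * u i\<bar> * \<bar>\<Sum>j\<in>S2. b j * v j\<bar>"
    using up low unfolding p_def q_def by (simp add: mult_ac)
  show "\<rho> * L2_set u S1 * L2_set v S2 - e \<le> \<sigma>" by (rule low)
  show "\<bar>\<Sum>i\<in>S1. a i * u i\<bar> \<le> L2_set u S1" using CS[of a u S1] L2_eq1[OF a1] by simp
  show "\<bar>\<Sum>j\<in>S2. b j * v j\<bar> \<le> L2_set v S2" using CS[of b v S2] L2_eq1[OF b1] by simp
qed



lemma r_dec:
  fixes n :: nat
  assumes dec: "\<forall>i j. M i j = \<rho> * u i * v j + W i j"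
    and Y: "Y \<subseteq> {..<n}" "\<forall>j. j \<notin> Y \<longrightarrow> b j = 0"
  shows "(\<Sum>j<n. M i j * b j) = \<rho> * (\<Sum>j\<in>Y. v j * b j) * u i + Mv W Y b i"
proof -
  have "(\<Sum>j<n. M i j * b j) = Mv M Y b i" unfolding Mv_def by (rule sum_restrict[OF Y])
  thus ?thesis unfolding Mv_dec[OF dec] by (simp add: mult_ac)
qed

lemma topk_L2:
  fixes n :: nat and r :: "nat \<Rightarrow> real"
  assumes "top_k_set n r k S" "T \<subseteq> {..<n}" "card T \<le> k"
  shows "L2_set r T \<le> L2_set r S"
proof -
  have "(\<Sum>i\<in>T. (r i)^2) \<le> (\<Sum>i\<in>S. (r i)^2)"
    using assms unfolding top_k_set_def
    by (intro topk[of "{..<n}"]) (auto simp: abs_le_square_iff)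
  thus ?thesis unfolding L2_set_def by simp
qed

lemma sel:
  fixes n :: nat
  assumes dec: "\<forall>i j. M i j = \<rho> * u i * v j + W i j"
    and Y: "Y \<subseteq> {..<n}" "\<forall>j. j \<notin> Y \<longrightarrow> b j = 0"
    and top: "top_k_set n (\<lambda>i. \<Sum>j<n. M i j * b j) k S"
    and T: "T \<subseteq> {..<n}" "card T \<le> k"
    and eS: "L2_set (Mv W Y b) S \<le> e" and eT: "L2_set (Mv W Y b) T \<le> e"
  shows "\<bar>\<rho> * (\<Sum>j\<in>Y. v j * b j)\<bar> * L2_set u T \<le> \<bar>\<rho> * (\<Sum>j\<in>Y. v j * b j)\<bar> * L2_set u S + 2*e"
proof -
  define c where "c = \<rho> * (\<Sum>j\<in>Y. v j * b j)"
  define r where "r = (\<lambda>i. \<Sum>j<n. M i j * b j)"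
  have rd: "r i = c * u i + Mv W Y b i" for i unfolding r_def c_def by (rule r_dec[OF dec Y])
  have tk: "L2_set r T \<le> L2_set r S" using topk_L2[OF top[folded r_def] T] .
  have "\<bar>c\<bar> * L2_set u T = L2_set (\<lambda>i. r i - Mv W Y b i) T"
    unfolding L2_scale[symmetric] rd by simp
  also have "\<dots> \<le> L2_set r T + L2_set (Mv W Y b) T" by (rule L2_minus)
  also have "\<dots> \<le> L2_set r S + e" using tk eT by simp
  also have "L2_set r S = L2_set (\<lambda>i. c * u i + Mv W Y b i) S" unfolding rd by simp
  also have "\<dots> \<le> L2_set (\<lambda>i. c * u i) S + L2_set (Mv W Y b) S" by (rule L2_set_triangle_ineq)
  also have "\<dots> \<le> \<bar>c\<bar> * L2_set u S + e" using eS by (simp add: L2_scale)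
  finally show ?thesis unfolding c_def by simp
qed

lemma miss:
  fixes n :: nat
  assumes dec: "\<forall>i j. M i j = \<rho> * u i * v j + W i j"
    and Y: "Y \<subseteq> {..<n}" "\<forall>j. j \<notin> Y \<longrightarrow> b j = 0"
    and top: "top_k_set n (\<lambda>i. \<Sum>j<n. M i j * b j) k S"
    and sp: "card {i. i < n \<and> u i \<noteq> 0} \<le> k"
    and e1: "L2_set (Mv W Y b) ({i. i < n \<and> u i \<noteq> 0} - S) \<le> e"
    and e2: "L2_set (Mv W Y b) (S - {i. i < n \<and> u i \<noteq> 0}) \<le> e"
  shows "\<bar>\<rho> * (\<Sum>j\<in>Y. v j * b j)\<bar> * L2_set u ({..<n} - S) \<le> 2*e"
proof -
  define c where "c = \<rho> * (\<Sum>j\<in>Y. v j * b j)"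
  define r where "r = (\<lambda>i. \<Sum>j<n. M i j * b j)"
  define U where "U = {i. i < n \<and> u i \<noteq> 0}"
  define mi where "mi = U - S"
  define ex where "ex = S - U"
  have rd: "r i = c * u i + Mv W Y b i" for i unfolding r_def c_def by (rule r_dec[OF dec Y])
  have Sn: "S \<subseteq> {..<n}" and cS: "card S = k" and tp: "\<forall>i\<in>S. \<forall>j\<in>{..<n} - S. \<bar>r j\<bar> \<le> \<bar>r i\<bar>"
    using top unfolding top_k_set_def r_def by auto
  have fU: "finite U" unfolding U_def by auto
  have fS: "finite S" using Sn finite_subset by blast
  have c1: "card U = card (U \<inter> S) + card mi" unfolding mi_def
    using fU fS by (metis Int_Diff_Un Int_Diff_disjoint card_Un_disjoint finite_Diff finite_Int)
  have c2: "card S = card (U \<inter> S) + card ex" unfolding ex_def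
    using fU fS by (metis Int_Diff_Un Int_Diff_disjoint card_Un_disjoint finite_Diff finite_Int Int_commute)
  have "(\<Sum>i\<in>mi. (r i)^2) \<le> (\<Sum>i\<in>ex. (r i)^2)"
  proof (rule core)
    show "finite mi" "finite ex" unfolding mi_def ex_def using fU fS by auto
    show "card mi \<le> card ex" using c1 c2 cS sp unfolding U_def by linarith
    show "\<forall>x\<in>mi. \<forall>y\<in>ex. (r x)\<^sup>2 \<le> (r y)\<^sup>2" unfolding mi_def ex_def U_def
      using tp by (auto simp: abs_le_square_iff)
    show "\<forall>y\<in>ex. 0 \<le> (r y)\<^sup>2" by simp
  qed
  hence "L2_set r mi \<le> L2_set r ex" unfolding L2_set_def by simp
  also have "L2_set r ex = L2_set (Mv W Y b) ex"
    using Sn unfolding ex_def U_def by (intro L2_set_cong) (auto simp: rd)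
  finally have rm: "L2_set r mi \<le> e" using e2 unfolding ex_def U_def by simp
  have "L2_set u ({..<n} - S) = L2_set u mi"
    unfolding mi_def U_def by (rule L2_restrict) auto
  hence "\<bar>c\<bar> * L2_set u ({..<n} - S) = \<bar>c\<bar> * L2_set u mi" by simp
  also have "\<dots> = L2_set (\<lambda>i. r i - Mv W Y b i) mi"
    unfolding L2_scale[symmetric] rd by simp
  also have "\<dots> \<le> L2_set r mi + L2_set (Mv W Y b) mi" by (rule L2_minus)
  also have "\<dots> \<le> 2 * e" using rm e1 unfolding mi_def U_def by simp
  finally show ?thesis unfolding c_def .
qed

lemma noise_entry:
  assumes "noise W {i} {j} e"
  shows "\<bar>W i j\<bar> \<le> e"
proof -
  have "L2_set (Mv W {j} (\<lambda>x. if x = j then 1 else 0)) {i} \<le> e"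
    using assms unfolding noise_def by simp
  thus ?thesis unfolding Mv_def by simp
qed



lemma sin_le_dist:
  fixes n :: nat
  assumes a1: "(\<Sum>i<n. (a i)^2) = 1" and u1: "(\<Sum>i<n. (u i)^2) = 1"
  shows "sin_angle n a u \<le> L2_set (\<lambda>i. a i - t * u i) {..<n}"
proof -
  define p where "p = vinner n a u"
  have "(\<Sum>i<n. (a i - t * u i)^2) = (\<Sum>i<n. (a i)^2) - 2 * t * (\<Sum>i<n. a i * u i) + t^2 * (\<Sum>i<n. (u i)^2)"
    by (simp add: power2_diff sum.distrib sum_subtractf sum_distrib_left power_mult_distrib mult_ac)
  also have "\<dots> = 1 - 2*t*p + t^2" unfolding p_def vinner_def using a1 u1 by simp
  finally have e: "(\<Sum>i<n. (a i - t * u i)^2) = 1 - 2*t*p + t^2" .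
  have "1 - p^2 \<le> 1 - 2*t*p + t^2" using power2_diff[of t p] zero_le_power2[of "t - p"] by linarith
  thus ?thesis unfolding sin_angle_def L2_set_def e p_def[symmetric] by simp
qed

lemma final_sin:
  fixes n :: nat
  assumes L: "lsp M S1 S2 a b \<sigma>" and dec: "\<forall>i j. M i j = \<rho> * u i * v j + W i j"
    and S1n: "S1 \<subseteq> {..<n}" and u1: "(\<Sum>i<n. (u i)^2) = 1" and sp: "0 < \<sigma>"
    and eW: "L2_set (Mv W S2 b) S1 \<le> e"
  shows "sin_angle n a u \<le> L2_set u ({..<n} - S1) + 2 * e / \<sigma>"
proof -
  have az: "\<forall>i. i \<notin> S1 \<longrightarrow> a i = 0" and a1: "(\<Sum>i\<in>S1. (a i)^2) = 1"
    and eqa: "\<forall>i\<in>S1. Mv M S2 b i = \<sigma> * a i" using L unfolding lsp_def by auto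
  have fS1: "finite S1" using S1n finite_subset by blast
  define q where "q = (\<Sum>j\<in>S2. v j * b j)"
  define c where "c = \<rho> * q / \<sigma>"
  define w where "w = (\<lambda>i. Mv W S2 b i / \<sigma>)"
  have aw: "a i = c * u i + w i" if "i \<in> S1" for i
  proof -
    have "\<sigma> * a i = \<rho> * u i * q + Mv W S2 b i" using eqa that Mv_dec[OF dec] q_def by metis
    hence "a i = (\<rho> * u i * q + Mv W S2 b i) / \<sigma>" using sp by (simp add: field_simps)
    thus ?thesis unfolding c_def w_def by (simp add: add_divide_distrib mult_ac)
  qed
  define wn where "wn = L2_set w S1"
  have "wn = \<bar>1/\<sigma>\<bar> * L2_set (Mv W S2 b) S1" unfolding wn_def w_def L2_scale[symmetric] by simp
  hence wn_le: "wn \<le> e / \<sigma>" using eW sp by (simp add: divide_right_mono)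
  have wn0: "0 \<le> wn" unfolding wn_def by simp
  define s2 where "s2 = (\<Sum>i\<in>S1. (u i)^2)"
  define h2 where "h2 = (\<Sum>i\<in>{..<n} - S1. (u i)^2)"
  have sh: "s2 + h2 = 1" unfolding s2_def h2_def u1[symmetric]
    using sum.subset_diff[OF S1n, of "\<lambda>i. (u i)^2"] by simp
  have s0: "0 \<le> s2" "0 \<le> h2" unfolding s2_def h2_def by (auto intro: sum_nonneg)
  define \<eta> where "\<eta> = L2_set u ({..<n} - S1)"
  have eta: "\<eta> = sqrt h2" unfolding \<eta>_def h2_def L2_set_def ..
  have eta1: "\<eta> \<le> 1" using eta sh s0 by simp
  have "(\<Sum>i<n. (a i)^2) = (\<Sum>i\<in>S1. (a i)^2)"
    by (rule sum.mono_neutral_right) (use S1n az in auto)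
  hence a1n: "(\<Sum>i<n. (a i)^2) = 1" using a1 by simp
  define t where "t = c * s2"
  define d where "d = (\<lambda>i. if i \<in> S1 then (1 - s2) * u i else - (s2 * u i))"
  define wt where "wt = (\<lambda>i. if i \<in> S1 then w i else 0)"
  have decomp: "a i - t * u i = wt i + c * d i" for i
    unfolding t_def d_def wt_def using aw az by (auto simp: algebra_simps)
  have "sin_angle n a u \<le> L2_set (\<lambda>i. a i - t * u i) {..<n}" by (rule sin_le_dist[OF a1n u1])
  also have "\<dots> = L2_set (\<lambda>i. wt i + c * d i) {..<n}" unfolding decomp ..
  also have "\<dots> \<le> L2_set wt {..<n} + L2_set (\<lambda>i. c * d i) {..<n}" by (rule L2_set_triangle_ineq)
  also have "L2_set wt {..<n} = wn"
  proof -
    have "L2_set wt {..<n} = L2_set wt S1" by (rule L2_restrict[OF S1n]) (auto simp: wt_def)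
    also have "\<dots> = wn" unfolding wn_def wt_def by (intro L2_set_cong) auto
    finally show ?thesis .
  qed
  also have "L2_set (\<lambda>i. c * d i) {..<n} = \<bar>c\<bar> * sqrt (s2 * h2)"
  proof -
    have "(\<Sum>i<n. (d i)^2) = (\<Sum>i\<in>S1. (d i)^2) + (\<Sum>i\<in>{..<n} - S1. (d i)^2)"
      using sum.subset_diff[OF S1n, of "\<lambda>i. (d i)^2"] by simp
    also have "(\<Sum>i\<in>S1. (d i)^2) = (1 - s2)^2 * s2"
      unfolding s2_def d_def by (simp add: sum_distrib_left power_mult_distrib)
    also have "(\<Sum>i\<in>{..<n} - S1. (d i)^2) = s2^2 * h2"
      unfolding h2_def d_def by (simp add: sum_distrib_left power_mult_distrib)
    also have "(1 - s2)^2 * s2 + s2^2 * h2 = s2 * h2"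
    proof -
      have hh: "1 - s2 = h2" using sh by simp
      have "(1 - s2)^2 * s2 + s2^2 * h2 = h2^2 * s2 + s2^2 * h2" unfolding hh ..
      also have "\<dots> = s2 * h2 * (h2 + s2)" by (simp add: power2_eq_square algebra_simps)
      also have "\<dots> = s2 * h2" using sh by simp
      finally show ?thesis .
    qed
    finally have "(\<Sum>i<n. (d i)^2) = s2 * h2" .
    hence "L2_set d {..<n} = sqrt (s2 * h2)" unfolding L2_set_def by simp
    thus ?thesis by (simp add: L2_scale)
  qed
  also have "\<bar>c\<bar> * sqrt (s2 * h2) = (\<bar>c\<bar> * sqrt s2) * \<eta>" unfolding eta by (simp add: real_sqrt_mult)
  also have "\<bar>c\<bar> * sqrt s2 \<le> 1 + wn"
  proof -
    have "\<bar>c\<bar> * sqrt s2 = L2_set (\<lambda>i. c * u i) S1" unfolding L2_scale s2_def L2_set_def ..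
    also have "\<dots> = L2_set (\<lambda>i. a i - w i) S1" using aw by (intro L2_set_cong) auto
    also have "\<dots> \<le> L2_set a S1 + wn" unfolding wn_def by (rule L2_minus)
    also have "\<dots> = 1 + wn" using L2_eq1[OF a1] by simp
    finally show ?thesis .
  qed
  hence "wn + (\<bar>c\<bar> * sqrt s2) * \<eta> \<le> wn + (1 + wn) * \<eta>"
    using eta s0 by (intro add_left_mono mult_right_mono) auto
  also have "\<dots> \<le> \<eta> + 2 * wn"
  proof -
    have "wn * \<eta> \<le> wn" using eta1 wn0 by (simp add: mult_left_le)
    moreover have "(1 + wn) * \<eta> = \<eta> + wn * \<eta>" by (simp add: distrib_right)
    ultimately show ?thesis by linarith
  qed
  also have "\<dots> \<le> \<eta> + 2 * e / \<sigma>" using wn_le by simp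
  finally show ?thesis unfolding \<eta>_def .
qed



definition Ptop :: "nat \<Rightarrow> (nat \<Rightarrow> real) \<Rightarrow> nat \<Rightarrow> real" where
  "Ptop n u k = sum_list (map (\<lambda>x. x\<^sup>2) (take k (abs_sorted_desc n u)))"

lemma struct_fun_Ptop: "struct_fun n u k = inverse (Ptop n u k)"
  unfolding struct_fun_def Ptop_def ..

lemma Ptop_props:
  fixes n k :: nat and u :: "nat \<Rightarrow> real"
  shows "\<exists>T. T \<subseteq> {..<n} \<and> card T \<le> k \<and> Ptop n u k = (\<Sum>i\<in>T. (u i)^2)"
    and "\<And>T. T \<subseteq> {..<n} \<Longrightarrow> card T \<le> k \<Longrightarrow> (\<Sum>i\<in>T. (u i)^2) \<le> Ptop n u k"
proof -
  define g where "g = (\<lambda>i. \<bar>u i\<bar>)"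
  define L where "L = sort_key g [0..<n]"
  define R where "R = rev L"
  have sL: "sort (map g [0..<n]) = map g L"
    unfolding L_def by (rule properties_for_sort) (simp_all add: mset_map)
  have asd: "abs_sorted_desc n u = map g R"
    unfolding abs_sorted_desc_def R_def g_def[symmetric] sL by (simp add: rev_map)
  have dR: "distinct R" unfolding R_def L_def by simp
  have setR: "set R = {..<n}" unfolding R_def L_def by auto
  have lR: "length R = n" unfolding R_def L_def by simp
  define T0 where "T0 = set (take k R)"
  have P: "Ptop n u k = (\<Sum>i\<in>T0. (u i)^2)"
  proof -
    have "Ptop n u k = sum_list (map (\<lambda>i. (g i)^2) (take k R))"
      unfolding Ptop_def asd take_map by (simp add: comp_def)
    also have "\<dots> = (\<Sum>i\<in>T0. (g i)^2)" unfolding T0_def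
      by (rule sum_list_distinct_conv_sum_set) (use dR in simp)
    finally show ?thesis unfolding g_def by simp
  qed
  have T0n: "T0 \<subseteq> {..<n}" unfolding T0_def using setR by (metis set_take_subset)
  have cT0: "card T0 = min k n" unfolding T0_def using dR lR by (simp add: distinct_card)
  show "\<exists>T. T \<subseteq> {..<n} \<and> card T \<le> k \<and> Ptop n u k = (\<Sum>i\<in>T. (u i)^2)"
    using P T0n cT0 by (intro exI[of _ T0]) auto
  fix T assume T: "T \<subseteq> {..<n}" "card T \<le> k"
  show "(\<Sum>i\<in>T. (u i)^2) \<le> Ptop n u k"
  proof (cases "n \<le> k")
    case True
    hence "T0 = {..<n}" unfolding T0_def using lR setR by simp
    thus ?thesis unfolding P using T by (intro sum_mono2) auto
  next
    case False
    have sw: "sorted_wrt (\<lambda>x y. g y \<le> g x) R"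
    proof -
      have "sorted_wrt (\<le>) (map g L)" unfolding L_def by (simp add: sorted_sort_key)
      hence "sorted_wrt (\<lambda>x y. g x \<le> g y) L" by (simp add: sorted_wrt_map)
      thus ?thesis unfolding R_def by (simp add: sorted_wrt_rev)
    qed
    have ord: "\<forall>i\<in>T0. \<forall>j\<in>{..<n} - T0. (u j)^2 \<le> (u i)^2"
    proof (intro ballI)
      fix i j assume i: "i \<in> T0" and j: "j \<in> {..<n} - T0"
      have "j \<in> set (drop k R)" using j setR unfolding T0_def
        by (metis DiffE Un_iff append_take_drop_id set_append)
      moreover have "sorted_wrt (\<lambda>x y. g y \<le> g x) (take k R @ drop k R)" using sw by simp
      ultimately have "g j \<le> g i" using i unfolding T0_def sorted_wrt_append by blast
      thus "(u j)^2 \<le> (u i)^2" unfolding g_def by (simp add: abs_le_square_iff)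
    qed
    show ?thesis unfolding P
      by (rule topk[of "{..<n}"]) (use T T0n cT0 False ord in auto)
  qed
qed



lemma arith1:
  fixes \<rho> x y Lu Lv e P Q :: real
  assumes "0 < \<rho>" "0 < x" "0 < y" "x/2 \<le> Lu" "y/2 \<le> Lv" "e \<le> \<rho>*x*y/100"
    "\<rho>*Lu*Lv - 2*e \<le> \<rho>*P*Q" "0 \<le> P" "P \<le> Lu" "0 \<le> Q"
  shows "y/4 \<le> Q"
proof -
  have Lu0: "0 < Lu" using assms by linarith
  have "\<rho>*P*Q \<le> \<rho>*Lu*Q" using assms by (intro mult_right_mono mult_left_mono) auto
  moreover have "\<rho>*Lu*(y/2) \<le> \<rho>*Lu*Lv" using assms Lu0 by (intro mult_left_mono) auto
  moreover have "\<rho>*x*y \<le> \<rho>*(2*Lu)*y" using assms by (intro mult_right_mono mult_left_mono) auto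
  ultimately have "\<rho>*Lu*(y/2) - \<rho>*(2*Lu)*y/50 \<le> \<rho>*Lu*Q" using assms by linarith
  hence "\<rho>*Lu*(23*y/50) \<le> \<rho>*Lu*Q" by (simp add: algebra_simps)
  hence "23*y/50 \<le> Q" using Lu0 assms(1) by (simp add: mult_le_cancel_left_pos)
  thus ?thesis using assms by linarith
qed

lemma arith2:
  fixes \<rho> x y z e Q A S :: real
  assumes "0 < \<rho>" "0 < y" "y/4 \<le> Q" "0 \<le> x" "x \<le> z" "\<rho>*Q*A \<le> \<rho>*Q*S + 2*e" "z \<le> A"
    "e \<le> \<rho>*x*y/100"
  shows "z/2 \<le> S"
proof -
  have Q0: "0 < Q" using assms by linarith
  have "\<rho>*Q*z \<le> \<rho>*Q*A" using assms Q0 by (intro mult_left_mono) auto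
  moreover have "\<rho>*x*y \<le> \<rho>*z*(4*Q)" using assms by (intro mult_mono) auto
  ultimately have "\<rho>*Q*z - \<rho>*z*(4*Q)/50 \<le> \<rho>*Q*S" using assms by linarith
  hence "\<rho>*Q*(23*z/25) \<le> \<rho>*Q*S" by (simp add: algebra_simps)
  hence "23*z/25 \<le> S" using Q0 assms(1) by (simp add: mult_le_cancel_left_pos)
  moreover have "0 \<le> z" using assms by linarith
  ultimately show ?thesis by linarith
qed

lemma arith3:
  fixes \<rho> x y a b a' b' e w1 w2 :: real
  assumes "0 < \<rho>" "0 < x" "0 < y" "x \<le> a'" "y \<le> b'" "0 \<le> b" "b \<le> y" "0 \<le> a"
    "\<rho>*a'*b' - w1 \<le> \<rho>*a*b + w2" "w1 \<le> e" "w2 \<le> e" "e \<le> \<rho>*x*y/100"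
  shows "x/2 \<le> a"
proof -
  have "\<rho>*x*y \<le> \<rho>*a'*b'" using assms by (intro mult_mono) auto
  moreover have "\<rho>*a*b \<le> \<rho>*a*y" using assms by (intro mult_left_mono) auto
  ultimately have "\<rho>*x*y - \<rho>*x*y/50 \<le> \<rho>*a*y" using assms by linarith
  moreover have "\<rho>*y*(49*x/50) = \<rho>*x*y - \<rho>*x*y/50" by (simp add: field_simps)
  moreover have "\<rho>*y*a = \<rho>*a*y" by simp
  ultimately have "\<rho>*y*(49*x/50) \<le> \<rho>*y*a" by linarith
  hence "49*x/50 \<le> a" using assms(1,3) by (simp add: mult_le_cancel_left_pos)
  thus ?thesis using assms by linarith
qed

lemma avg:
  fixes f :: "nat \<Rightarrow> real"
  assumes "finite A" "card A = k" "2 \<le> k" "sum f A = 1" "\<forall>i\<in>A. 0 \<le> f i"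
  shows "\<exists>T \<subseteq> A. card T = k - 1 \<and> 1/2 \<le> sum f T"
proof -
  have Ane: "A \<noteq> {}" using assms by auto
  have "Min (f ` A) \<in> f ` A" by (rule Min_in) (use assms(1) Ane in auto)
  then obtain j where j0: "j \<in> A" "f j = Min (f ` A)" by auto
  hence j: "j \<in> A" "\<forall>i\<in>A. f j \<le> f i" using assms(1) by auto
  have "of_nat k * f j \<le> 1" using sum_bounded_below[of A "f j" f] j assms by auto
  moreover have "2 * f j \<le> of_nat k * f j" using assms(3,5) j(1) by (intro mult_right_mono) auto
  ultimately have "f j \<le> 1/2" by linarith
  moreover have "sum f (A - {j}) = 1 - f j" using assms(1,4) j(1) by (simp add: sum_diff1)
  moreover have "card (A - {j}) = k - 1" using assms j by simp
  ultimately show ?thesis by (intro exI[of _ "A - {j}"]) auto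
qed



lemma P_facts:
  fixes n ku :: nat and u :: "nat \<Rightarrow> real" and P :: "nat \<Rightarrow> real"
  assumes u1: "(\<Sum>i<n. (u i)^2) = 1" and su: "card {i. i < n \<and> u i \<noteq> 0} \<le> ku"
    and PE: "\<And>k. \<exists>T. T \<subseteq> {..<n} \<and> card T \<le> k \<and> P k \<le> (\<Sum>i\<in>T. (u i)^2)"
    and PU: "\<And>k T. T \<subseteq> {..<n} \<Longrightarrow> card T \<le> k \<Longrightarrow> (\<Sum>i\<in>T. (u i)^2) \<le> P k"
  shows "1 \<le> ku" and "\<And>k. 0 \<le> P k" and "\<And>k. P k \<le> 1"
    and "\<And>k k'. k \<le> k' \<Longrightarrow> P k \<le> P k'"
    and "\<And>k. 1 \<le> k \<Longrightarrow> 0 < P k" and "1 \<le> P ku"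
    and "\<And>m. 1 \<le> m \<Longrightarrow> ku \<le> m + 1 \<Longrightarrow> 1/2 \<le> P m"
proof -
  define U where "U = {i. i < n \<and> u i \<noteq> 0}"
  have fU: "finite U" unfolding U_def by auto
  have U1: "(\<Sum>i\<in>U. (u i)^2) = 1"
  proof -
    have "(\<Sum>i<n. (u i)^2) = (\<Sum>i\<in>U. (u i)^2)"
      by (rule sum.mono_neutral_right) (auto simp: U_def)
    thus ?thesis using u1 by simp
  qed
  have Une: "U \<noteq> {}" using U1 by auto
  then obtain i1 where i1: "i1 < n" "u i1 \<noteq> 0" unfolding U_def by auto
  show "1 \<le> ku" using su Une fU unfolding U_def[symmetric]
    by (metis card_0_eq less_one not_le order_trans le_neq_implies_less not_less_eq_eq)
  show P0: "0 \<le> P k" for k using PU[of "{}" k] by simp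
  show P1: "P k \<le> 1" for k
  proof -
    obtain T where T: "T \<subseteq> {..<n}" "card T \<le> k" "P k \<le> (\<Sum>i\<in>T. (u i)^2)" using PE by blast
    have "(\<Sum>i\<in>T. (u i)^2) \<le> (\<Sum>i<n. (u i)^2)" using T by (intro sum_mono2) auto
    thus ?thesis using T u1 by simp
  qed
  show Pm: "P k \<le> P k'" if "k \<le> k'" for k k'
  proof -
    obtain T where T: "T \<subseteq> {..<n}" "card T \<le> k" "P k \<le> (\<Sum>i\<in>T. (u i)^2)" using PE by blast
    thus ?thesis using PU[of T k'] that by simp
  qed
  show "0 < P k" if "1 \<le> k" for k
  proof -
    have "(u i1)^2 \<le> P 1" using PU[of "{i1}" 1] i1 by simp
    moreover have "0 < (u i1)^2" using i1 by simp
    ultimately show ?thesis using Pm[OF that] by linarith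
  qed
  show "1 \<le> P ku" using PU[of U ku] su U1 unfolding U_def by auto
  show "1/2 \<le> P m" if m: "1 \<le> m" "ku \<le> m + 1" for m
  proof (cases "card U \<le> m")
    case True
    have "U \<subseteq> {..<n}" unfolding U_def by auto
    hence "1 \<le> P m" using PU[of U m] U1 True by simp
    thus ?thesis by simp
  next
    case False
    hence cU: "card U = m + 1" using su m unfolding U_def by linarith
    obtain T where T: "T \<subseteq> U" "card T = (m+1) - 1" "1/2 \<le> (\<Sum>i\<in>T. (u i)^2)"
      using avg[OF fU cU _ U1] m by auto
    have "T \<subseteq> {..<n}" using T(1) unfolding U_def by auto
    hence "(\<Sum>i\<in>T. (u i)^2) \<le> P m" using PU[of T m] T(2) by simp
    thus ?thesis using T(3) by linarith
  qed
qed



lemma main_abs: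
  fixes n ku kv K i0 j0 :: nat and \<rho> B :: real and u v :: "nat \<Rightarrow> real"
    and M W :: "nat \<Rightarrow> nat \<Rightarrow> real" and Su Sv :: "nat \<Rightarrow> nat set"
    and uh vh :: "nat \<Rightarrow> nat \<Rightarrow> real" and \<sigma> :: "nat \<Rightarrow> real"
    and E :: "nat \<Rightarrow> nat \<Rightarrow> real" and Pu Pv :: "nat \<Rightarrow> real"
  assumes Kdef: "K = max ku kv" and rho: "0 < \<rho>"
    and u1: "(\<Sum>i<n. (u i)^2) = 1" and v1: "(\<Sum>i<n. (v i)^2) = 1"
    and su: "card {i. i < n \<and> u i \<noteq> 0} \<le> ku" and sv: "card {i. i < n \<and> v i \<noteq> 0} \<le> kv"
    and dec: "\<forall>i j. M i j = \<rho> * u i * v j + W i j"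
    and NW: "\<And>X Y. X \<subseteq> {..<n} \<Longrightarrow> Y \<subseteq> {..<n} \<Longrightarrow> card X \<le> ku \<Longrightarrow> card Y \<le> kv \<Longrightarrow>
        noise W X Y (E (card X) (card Y))"
    and NWT: "\<And>X Y. X \<subseteq> {..<n} \<Longrightarrow> Y \<subseteq> {..<n} \<Longrightarrow> card X \<le> ku \<Longrightarrow> card Y \<le> kv \<Longrightarrow>
        noise (TT W) Y X (E (card X) (card Y))"
    and PuE: "\<And>k. \<exists>T. T \<subseteq> {..<n} \<and> card T \<le> k \<and> Pu k \<le> (\<Sum>i\<in>T. (u i)^2)"
    and PuU: "\<And>k T. T \<subseteq> {..<n} \<Longrightarrow> card T \<le> k \<Longrightarrow> (\<Sum>i\<in>T. (u i)^2) \<le> Pu k"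
    and PvE: "\<And>k. \<exists>T. T \<subseteq> {..<n} \<and> card T \<le> k \<and> Pv k \<le> (\<Sum>i\<in>T. (v i)^2)"
    and PvU: "\<And>k T. T \<subseteq> {..<n} \<Longrightarrow> card T \<le> k \<Longrightarrow> (\<Sum>i\<in>T. (v i)^2) \<le> Pv k"
    and N1: "\<And>\<tau> a b. 1 \<le> \<tau> \<Longrightarrow> \<tau> \<le> K \<Longrightarrow> a \<le> 2 * min \<tau> ku \<Longrightarrow> b \<le> 2 * min \<tau> kv \<Longrightarrow>
        E a b \<le> \<rho> * sqrt (Pu (min \<tau> ku)) * sqrt (Pv (min \<tau> kv)) / 100"
    and N2: "\<And>a b. a \<le> ku \<Longrightarrow> b \<le> kv \<Longrightarrow> E a b \<le> B"
    and i0: "i0 < n" "j0 < n" and mx: "\<forall>i<n. \<forall>j<n. \<bar>M i j\<bar> \<le> \<bar>M i0 j0\<bar>"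
    and S0: "Su 0 = {i0}" "Sv 0 = {j0}"
    and LS: "\<And>t. t \<le> K \<Longrightarrow> lsp M (Su t) (Sv t) (uh t) (vh t) (\<sigma> t)"
    and TU: "\<And>t. t < K \<Longrightarrow> top_k_set n (\<lambda>i. \<Sum>j<n. M i j * vh t j) (min (t+1) ku) (Su (Suc t))"
    and TV: "\<And>t. t < K \<Longrightarrow> top_k_set n (\<lambda>j. \<Sum>i<n. M i j * uh t i) (min (t+1) kv) (Sv (Suc t))"
  shows "sin_angle n (uh K) u \<le> 22 * B / \<rho>"
proof -
  note PF = P_facts[OF u1 su PuE PuU]
  note QF = P_facts[OF v1 sv PvE PvU]
  have ku1: "1 \<le> ku" by (rule PF(1))
  have kv1: "1 \<le> kv" by (rule QF(1))
  have K1: "1 \<le> K" using Kdef ku1 by simp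
  have decT: "\<forall>i j. TT M i j = \<rho> * v i * u j + TT W i j" using dec unfolding TT_def by (simp add: mult_ac)
  have sets: "Su t \<subseteq> {..<n} \<and> Sv t \<subseteq> {..<n} \<and> card (Su t) = min (max t 1) ku \<and> card (Sv t) = min (max t 1) kv"
    if "t \<le> K" for t
  proof (cases t)
    case 0 thus ?thesis using S0 i0 ku1 kv1 by auto
  next
    case (Suc t')
    hence "t' < K" using that by simp
    thus ?thesis using TU[of t'] TV[of t'] Suc unfolding top_k_set_def by auto
  qed
  define x where "x = (\<lambda>t. sqrt (Pu (min (max t 1) ku)))"
  define y where "y = (\<lambda>t. sqrt (Pv (min (max t 1) kv)))"
  have xpos: "0 < x t" for t unfolding x_def using PF(5) ku1 by simp
  have ypos: "0 < y t" for t unfolding y_def using QF(5) kv1 by simp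
  have x1: "x t \<le> 1" for t unfolding x_def using PF(3) by simp
  have y1: "y t \<le> 1" for t unfolding y_def using QF(3) by simp
  have xmono: "x t \<le> x (Suc t)" for t unfolding x_def using PF(4) by simp
  have ymono: "y t \<le> y (Suc t)" for t unfolding y_def using QF(4) by simp
  define e where "e = (\<lambda>t. \<rho> * x t * y t / 100)"
  have Nb: "E a b \<le> e t" if "t \<le> K" "a \<le> 2 * min (max t 1) ku" "b \<le> 2 * min (max t 1) kv" for t a b
    using N1[of "max t 1" a b] that K1 unfolding e_def x_def y_def by simp
  define p where "p = (\<lambda>t. \<Sum>i\<in>Su t. uh t i * u i)"
  define q where "q = (\<lambda>t. \<Sum>j\<in>Sv t. vh t j * v j)"
  define Inv where "Inv = (\<lambda>t. x t / 2 \<le> L2_set u (Su t) \<and> y t / 2 \<le> L2_set v (Sv t))"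
  have noise_t: "noise W (Su t) (Sv t) (E (card (Su t)) (card (Sv t)))" if "t \<le> K" for t
    using sets[OF that] by (intro NW) auto
  have et: "E (card (Su t)) (card (Sv t)) \<le> e t" if "t \<le> K" for t
    using sets[OF that] by (intro Nb[OF that]) auto
  have fin: "finite (Su t)" "finite (Sv t)" if "t \<le> K" for t
    using sets[OF that] finite_subset by blast+
  have cor: "y t / 4 \<le> \<bar>q t\<bar> \<and> x t / 4 \<le> \<bar>p t\<bar>" if t: "t \<le> K" and I: "Inv t" for t
  proof -
    note C = corr[OF dec LS[OF t] fin[OF t] noise_t[OF t] rho]
    have c1: "\<rho> * L2_set u (Su t) * L2_set v (Sv t) - 2 * e t \<le> \<rho> * \<bar>p t\<bar> * \<bar>q t\<bar>"
      using C(1) et[OF t] unfolding p_def q_def by linarith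
    have "y t / 4 \<le> \<bar>q t\<bar>"
      by (rule arith1[OF rho xpos ypos _ _ _ c1]) (use I C(2,3) in \<open>auto simp: Inv_def e_def p_def\<close>)
    moreover have "x t / 4 \<le> \<bar>p t\<bar>"
    proof (rule arith1[OF rho ypos xpos])
      show "\<rho> * L2_set v (Sv t) * L2_set u (Su t) - 2 * e t \<le> \<rho> * \<bar>q t\<bar> * \<bar>p t\<bar>"
        using c1 by (simp add: mult_ac)
    qed (use I C(2,3) in \<open>auto simp: Inv_def e_def q_def mult_ac\<close>)
    ultimately show ?thesis by simp
  qed

  have base: "Inv 0"
  proof -
    have x0: "x 0 = sqrt (Pu 1)" and y0: "y 0 = sqrt (Pv 1)" unfolding x_def y_def using ku1 kv1 by auto
    have single: "\<exists>i. i < n \<and> sqrt (P 1) \<le> \<bar>f i\<bar>"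
      if PE: "\<And>k. \<exists>T. T \<subseteq> {..<n} \<and> card T \<le> k \<and> P k \<le> (\<Sum>i\<in>T. (f i)^2)" and Pp: "0 < P 1"
      for P :: "nat \<Rightarrow> real" and f :: "nat \<Rightarrow> real"
    proof -
      obtain T where T: "T \<subseteq> {..<n}" "card T \<le> 1" "P 1 \<le> (\<Sum>i\<in>T. (f i)^2)" using PE by blast
      have fT: "finite T" using T(1) finite_subset by blast
      have "T \<noteq> {}" using T(3) Pp by auto
      hence "card T = 1" using T(2) fT by (simp add: Suc_leI card_gt_0_iff le_antisym)
      then obtain i where Ti: "T = {i}" by (rule card_1_singletonE)
      have "P 1 \<le> (f i)^2" using T(3) Ti by simp
      hence "sqrt (P 1) \<le> sqrt ((f i)^2)" by (rule real_sqrt_le_mono)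
      hence "sqrt (P 1) \<le> \<bar>f i\<bar>" by simp
      thus ?thesis using T(1) Ti by auto
    qed
    obtain i1 where i1: "i1 < n" "x 0 \<le> \<bar>u i1\<bar>" using single[OF PuE PF(5)] x0 by auto
    obtain j1 where j1: "j1 < n" "y 0 \<le> \<bar>v j1\<bar>" using single[OF PvE QF(5)] y0 by auto
    have ui0: "\<bar>u i0\<bar> \<le> x 0"
    proof -
      have "(u i0)^2 \<le> Pu 1" using PuU[of "{i0}" 1] i0 by simp
      thus ?thesis unfolding x0 by (simp add: real_le_rsqrt)
    qed
    have vj0: "\<bar>v j0\<bar> \<le> y 0"
    proof -
      have "(v j0)^2 \<le> Pv 1" using PvU[of "{j0}" 1] i0 by simp
      thus ?thesis unfolding y0 by (simp add: real_le_rsqrt)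
    qed
    have Wb: "\<bar>W i j\<bar> \<le> e 0" if "i < n" "j < n" for i j
    proof -
      have "noise W {i} {j} (E 1 1)" using NW[of "{i}" "{j}"] that ku1 kv1 by auto
      hence "\<bar>W i j\<bar> \<le> E 1 1" by (rule noise_entry)
      also have "E 1 1 \<le> e 0" using Nb[of 0 1 1] ku1 kv1 by simp
      finally show ?thesis .
    qed
    have m1: "\<rho> * \<bar>u i1\<bar> * \<bar>v j1\<bar> - \<bar>W i1 j1\<bar> \<le> \<rho> * \<bar>u i0\<bar> * \<bar>v j0\<bar> + \<bar>W i0 j0\<bar>"
    proof -
      have "\<rho> * \<bar>u i1\<bar> * \<bar>v j1\<bar> - \<bar>W i1 j1\<bar> \<le> \<bar>M i1 j1\<bar>"
      proof -
        have "\<rho> * u i1 * v j1 = M i1 j1 - W i1 j1" using dec by simp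
        hence "\<bar>\<rho> * u i1 * v j1\<bar> \<le> \<bar>M i1 j1\<bar> + \<bar>W i1 j1\<bar>" by (simp add: abs_triangle_ineq4)
        moreover have "\<bar>\<rho> * u i1 * v j1\<bar> = \<rho> * \<bar>u i1\<bar> * \<bar>v j1\<bar>" using rho by (simp add: abs_mult)
        ultimately show ?thesis by linarith
      qed
      also have "\<dots> \<le> \<bar>M i0 j0\<bar>" using mx i1 j1 by auto
      also have "\<dots> \<le> \<rho> * \<bar>u i0\<bar> * \<bar>v j0\<bar> + \<bar>W i0 j0\<bar>"
      proof -
        have "M i0 j0 = \<rho> * u i0 * v j0 + W i0 j0" using dec by simp
        hence "\<bar>M i0 j0\<bar> \<le> \<bar>\<rho> * u i0 * v j0\<bar> + \<bar>W i0 j0\<bar>" by (simp add: abs_triangle_ineq)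
        moreover have "\<bar>\<rho> * u i0 * v j0\<bar> = \<rho> * \<bar>u i0\<bar> * \<bar>v j0\<bar>" using rho by (simp add: abs_mult)
        ultimately show ?thesis by linarith
      qed
      finally show ?thesis .
    qed
    have "x 0 / 2 \<le> \<bar>u i0\<bar>"
      by (rule arith3[OF rho xpos ypos i1(2) j1(2) _ vj0 _ m1 Wb[OF i1(1) j1(1)] Wb[OF i0]])
         (auto simp: e_def)
    moreover have "y 0 / 2 \<le> \<bar>v j0\<bar>"
    proof (rule arith3[OF rho ypos xpos j1(2) i1(2) _ ui0 _ _ Wb[OF i1(1) j1(1)] Wb[OF i0]])
      show "\<rho> * \<bar>v j1\<bar> * \<bar>u i1\<bar> - \<bar>W i1 j1\<bar> \<le> \<rho> * \<bar>v j0\<bar> * \<bar>u i0\<bar> + \<bar>W i0 j0\<bar>"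
        using m1 by (simp add: mult_ac)
    qed (auto simp: e_def mult_ac)
    ultimately show ?thesis unfolding Inv_def S0 by simp
  qed

  have mm1: "min (Suc t) k \<le> 2 * min (max t 1) k" if "1 \<le> k" for t k :: nat
    using that by (auto simp: min_def max_def)
  have mm2: "min (max t 1) k \<le> 2 * min (max t 1) k" for t k :: nat by simp
  have step: "Inv (Suc t)" if t: "t < K" and I: "Inv t" for t
  proof -
    have tK: "t \<le> K" using t by simp
    have SK: "Suc t \<le> K" using t by simp
    have qb: "y t / 4 \<le> \<bar>q t\<bar>" and pb: "x t / 4 \<le> \<bar>p t\<bar>" using cor[OF tK I] by auto
    have Lt: "\<forall>i. i \<notin> Su t \<longrightarrow> uh t i = 0" "\<forall>j. j \<notin> Sv t \<longrightarrow> vh t j = 0"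
      "(\<Sum>i\<in>Su t. (uh t i)^2) = 1" "(\<Sum>j\<in>Sv t. (vh t j)^2) = 1"
      using LS[OF tK] unfolding lsp_def by auto
    note st = sets[OF tK] and st1 = sets[OF SK]
    have et': "e t = \<rho> * x t * y t / 100" unfolding e_def ..
    obtain T where T: "T \<subseteq> {..<n}" "card T \<le> min (t+1) ku" "Pu (min (t+1) ku) \<le> (\<Sum>i\<in>T. (u i)^2)"
      using PuE by blast
    have xT: "x (Suc t) \<le> L2_set u T" unfolding x_def L2_set_def using T(3) by simp
    have eS: "L2_set (Mv W (Sv t) (vh t)) (Su (Suc t)) \<le> e t"
    proof -
      have "noise W (Su (Suc t)) (Sv t) (E (card (Su (Suc t))) (card (Sv t)))"
        using st st1 by (intro NW) auto
      hence "L2_set (Mv W (Sv t) (vh t)) (Su (Suc t)) \<le> E (card (Su (Suc t))) (card (Sv t))"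
        using Lt(4) unfolding noise_def by simp
      also have "\<dots> \<le> e t" using st st1 ku1 kv1 by (intro Nb[OF tK]) (auto simp: mm1)
      finally show ?thesis .
    qed
    have eT: "L2_set (Mv W (Sv t) (vh t)) T \<le> e t"
    proof -
      have "noise W T (Sv t) (E (card T) (card (Sv t)))"
        using st T by (intro NW) auto
      hence "L2_set (Mv W (Sv t) (vh t)) T \<le> E (card T) (card (Sv t))"
        using Lt(4) unfolding noise_def by simp
      also have "\<dots> \<le> e t"
      proof (rule Nb[OF tK])
        have "card T \<le> min (Suc t) ku" using T(2) by simp
        thus "card T \<le> 2 * min (max t 1) ku" using mm1[OF ku1, of t] by linarith
      qed (use st in auto)
      finally show ?thesis .
    qed
    have sl: "\<bar>\<rho> * (\<Sum>j\<in>Sv t. v j * vh t j)\<bar> * L2_set u T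
        \<le> \<bar>\<rho> * (\<Sum>j\<in>Sv t. v j * vh t j)\<bar> * L2_set u (Su (Suc t)) + 2 * e t"
      by (rule sel[OF dec _ Lt(2) TU[OF t] T(1) _ eS eT]) (use st T in auto)
    have "\<bar>\<rho> * (\<Sum>j\<in>Sv t. v j * vh t j)\<bar> = \<rho> * \<bar>q t\<bar>"
      unfolding q_def using rho by (simp add: abs_mult mult_ac)
    hence sl': "\<rho> * \<bar>q t\<bar> * L2_set u T \<le> \<rho> * \<bar>q t\<bar> * L2_set u (Su (Suc t)) + 2 * e t"
      using sl by simp
    have A1: "x (Suc t) / 2 \<le> L2_set u (Su (Suc t))"
      by (rule arith2[OF rho ypos[of t] qb _ xmono sl' xT]) (use xpos[of t] et' in auto)
    obtain T' where T': "T' \<subseteq> {..<n}" "card T' \<le> min (t+1) kv" "Pv (min (t+1) kv) \<le> (\<Sum>i\<in>T'. (v i)^2)"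
      using PvE by blast
    have yT: "y (Suc t) \<le> L2_set v T'" unfolding y_def L2_set_def using T'(3) by simp
    have eS': "L2_set (Mv (TT W) (Su t) (uh t)) (Sv (Suc t)) \<le> e t"
    proof -
      have "noise (TT W) (Sv (Suc t)) (Su t) (E (card (Su t)) (card (Sv (Suc t))))"
        using st st1 by (intro NWT) auto
      hence "L2_set (Mv (TT W) (Su t) (uh t)) (Sv (Suc t)) \<le> E (card (Su t)) (card (Sv (Suc t)))"
        using Lt(3) unfolding noise_def by simp
      also have "\<dots> \<le> e t" using st st1 ku1 kv1 by (intro Nb[OF tK]) (auto simp: mm1)
      finally show ?thesis .
    qed
    have eT': "L2_set (Mv (TT W) (Su t) (uh t)) T' \<le> e t"
    proof -
      have "noise (TT W) T' (Su t) (E (card (Su t)) (card T'))"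
        using st T' by (intro NWT) auto
      hence "L2_set (Mv (TT W) (Su t) (uh t)) T' \<le> E (card (Su t)) (card T')"
        using Lt(3) unfolding noise_def by simp
      also have "\<dots> \<le> e t"
      proof (rule Nb[OF tK])
        have "card T' \<le> min (Suc t) kv" using T'(2) by simp
        thus "card T' \<le> 2 * min (max t 1) kv" using mm1[OF kv1, of t] by linarith
      qed (use st in auto)
      finally show ?thesis .
    qed
    have TV': "top_k_set n (\<lambda>i. \<Sum>j<n. TT M i j * uh t j) (min (t+1) kv) (Sv (Suc t))"
      using TV[OF t] unfolding TT_def by simp
    have sl2: "\<bar>\<rho> * (\<Sum>j\<in>Su t. u j * uh t j)\<bar> * L2_set v T'
        \<le> \<bar>\<rho> * (\<Sum>j\<in>Su t. u j * uh t j)\<bar> * L2_set v (Sv (Suc t)) + 2 * e t"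
      by (rule sel[OF decT _ Lt(1) TV' T'(1) _ eS' eT']) (use st T' in auto)
    have "\<bar>\<rho> * (\<Sum>j\<in>Su t. u j * uh t j)\<bar> = \<rho> * \<bar>p t\<bar>"
      unfolding p_def using rho by (simp add: abs_mult mult_ac)
    hence sl2': "\<rho> * \<bar>p t\<bar> * L2_set v T' \<le> \<rho> * \<bar>p t\<bar> * L2_set v (Sv (Suc t)) + 2 * e t"
      using sl2 by simp
    have A2: "y (Suc t) / 2 \<le> L2_set v (Sv (Suc t))"
      by (rule arith2[OF rho xpos[of t] pb _ ymono sl2' yT]) (use ypos[of t] et' in \<open>auto simp: mult_ac\<close>)
    show ?thesis unfolding Inv_def using A1 A2 by simp
  qed
  have inv: "Inv t" if "t \<le> K" for t
    using that
  proof (induction t)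
    case 0 show ?case by (rule base)
  next
    case (Suc t) thus ?case using step by simp
  qed

  obtain t' where Kt: "K = Suc t'" using K1 by (cases K) auto
  have t'K: "t' < K" "t' \<le> K" using Kt by auto
  have kuK: "ku \<le> K" and kvK: "kv \<le> K" using Kdef by auto
  have KK: "K \<le> K" by simp
  have qb: "y t' / 4 \<le> \<bar>q t'\<bar>" using cor[OF t'K(2) inv[OF t'K(2)]] by simp
  have y23: "2/3 \<le> y t'"
  proof -
    have kvt: "kv \<le> Suc t'" using Kt Kdef by simp
    have "1/2 \<le> Pv (min (max t' 1) kv)"
      by (rule QF(7)) (use kv1 kvt in \<open>auto simp: min_def max_def\<close>)
    hence "(2/3)^2 \<le> Pv (min (max t' 1) kv)" by (simp add: power2_eq_square)
    thus ?thesis unfolding y_def by (rule real_le_rsqrt)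
  qed
  have q6: "1/6 \<le> \<bar>q t'\<bar>" using qb y23 by linarith
  have Lt': "\<forall>j. j \<notin> Sv t' \<longrightarrow> vh t' j = 0" "(\<Sum>j\<in>Sv t'. (vh t' j)^2) = 1"
    using LS[OF t'K(2)] unfolding lsp_def by auto
  note st' = sets[OF t'K(2)] and stK = sets[OF KK]
  have cK: "card (Su K) = ku" "card (Sv K) = kv" using stK kuK kvK K1 by (auto simp: max_absorb1 min_absorb2)
  have "min (t'+1) ku = ku" using kuK Kt by simp
  hence TUK: "top_k_set n (\<lambda>i. \<Sum>j<n. M i j * vh t' j) ku (Su K)"
    using TU[OF t'K(1)] Kt by simp
  define U where "U = {i. i < n \<and> u i \<noteq> 0}"
  have fU: "finite U" unfolding U_def by auto
  have B0: "0 \<le> B"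
  proof -
    have "0 \<le> E (card (Su K)) (card (Sv K))" by (rule noise_nonneg[OF noise_t[OF KK]])
    also have "\<dots> \<le> B" using cK by (intro N2) auto
    finally show ?thesis .
  qed
  have eB: "L2_set (Mv W (Sv t') (vh t')) X \<le> B" if "X \<subseteq> {..<n}" "card X \<le> ku" for X
  proof -
    have "noise W X (Sv t') (E (card X) (card (Sv t')))" using that st' by (intro NW) auto
    hence "L2_set (Mv W (Sv t') (vh t')) X \<le> E (card X) (card (Sv t'))"
      using Lt'(2) unfolding noise_def by simp
    also have "\<dots> \<le> B" using that st' by (intro N2) auto
    finally show ?thesis .
  qed
  have ms: "\<bar>\<rho> * (\<Sum>j\<in>Sv t'. v j * vh t' j)\<bar> * L2_set u ({..<n} - Su K) \<le> 2 * B"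
  proof (rule miss[OF dec _ Lt'(1) TUK su])
    show "Sv t' \<subseteq> {..<n}" using st' by simp
    show "L2_set (Mv W (Sv t') (vh t')) ({i. i < n \<and> u i \<noteq> 0} - Su K) \<le> B"
    proof (rule eB)
      show "{i. i < n \<and> u i \<noteq> 0} - Su K \<subseteq> {..<n}" by auto
      have "card ({i. i < n \<and> u i \<noteq> 0} - Su K) \<le> card {i. i < n \<and> u i \<noteq> 0}"
        by (rule card_mono) auto
      thus "card ({i. i < n \<and> u i \<noteq> 0} - Su K) \<le> ku" using su by linarith
    qed
    show "L2_set (Mv W (Sv t') (vh t')) (Su K - {i. i < n \<and> u i \<noteq> 0}) \<le> B"
    proof (rule eB)
      show "Su K - {i. i < n \<and> u i \<noteq> 0} \<subseteq> {..<n}" using stK by auto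
      have "card (Su K - {i. i < n \<and> u i \<noteq> 0}) \<le> card (Su K)"
        using stK finite_subset by (intro card_mono) auto
      thus "card (Su K - {i. i < n \<and> u i \<noteq> 0}) \<le> ku" using cK by linarith
    qed
  qed
  define \<eta> where "\<eta> = L2_set u ({..<n} - Su K)"
  have "\<bar>\<rho> * (\<Sum>j\<in>Sv t'. v j * vh t' j)\<bar> = \<rho> * \<bar>q t'\<bar>"
    unfolding q_def using rho by (simp add: abs_mult mult_ac)
  hence ms': "\<rho> * \<bar>q t'\<bar> * \<eta> \<le> 2 * B" using ms unfolding \<eta>_def by simp
  have eta0: "0 \<le> \<eta>" unfolding \<eta>_def by simp
  have "\<rho> * (1/6) * \<eta> \<le> \<rho> * \<bar>q t'\<bar> * \<eta>" using q6 rho eta0 by (intro mult_right_mono mult_left_mono) auto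
  hence "\<rho> * \<eta> \<le> 12 * B" using ms' by linarith
  hence eta_le: "\<eta> \<le> 12 * B / \<rho>" using rho by (simp add: field_simps mult.commute)
  note CK = corr[OF dec LS[OF KK] fin[OF KK] noise_t[OF KK] rho]
  have xK: "1 \<le> x K" unfolding x_def using PF(6) K1 kuK by (simp add: max_absorb1 min_absorb2)
  have yK: "1 \<le> y K" unfolding y_def using QF(6) K1 kvK by (simp add: max_absorb1 min_absorb2)
  have LuK: "1/2 \<le> L2_set u (Su K)" and LvK: "1/2 \<le> L2_set v (Sv K)"
    using inv[OF KK] xK yK unfolding Inv_def by auto
  have h1: "\<rho> * (1/2) * (1/2) \<le> \<rho> * L2_set u (Su K) * L2_set v (Sv K)"
    using LuK LvK rho by (intro mult_mono mult_left_mono) auto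
  have h2: "E (card (Su K)) (card (Sv K)) \<le> \<rho> / 100"
  proof -
    have "E (card (Su K)) (card (Sv K)) \<le> e K" by (rule et[OF KK])
    also have "\<dots> \<le> \<rho> * 1 * 1 / 100" unfolding e_def using x1[of K] y1[of K] xpos[of K] ypos[of K] rho
      by (intro divide_right_mono mult_mono mult_left_mono) auto
    finally show ?thesis by simp
  qed
  have h3: "\<rho> * (1/2) * (1/2) = \<rho> / 4" by simp
  have sigK: "\<rho> / 5 \<le> \<sigma> K" using CK(4) rho h1 h2 h3 by linarith
  have sigpos: "0 < \<sigma> K" using sigK rho by linarith
  have eWK: "L2_set (Mv W (Sv K) (vh K)) (Su K) \<le> B"
  proof -
    have "L2_set (Mv W (Sv K) (vh K)) (Su K) \<le> E (card (Su K)) (card (Sv K))"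
      using noise_t[OF KK] LS[OF KK] unfolding noise_def lsp_def by simp
    also have "\<dots> \<le> B" using cK by (intro N2) auto
    finally show ?thesis .
  qed
  have "sin_angle n (uh K) u \<le> \<eta> + 2 * B / \<sigma> K"
    unfolding \<eta>_def by (rule final_sin[OF LS[OF KK] dec _ u1 sigpos eWK]) (use stK in auto)
  also have "2 * B / \<sigma> K \<le> 2 * B / (\<rho> / 5)"
    using sigK B0 rho by (intro divide_left_mono) auto
  also have "2 * B / (\<rho> / 5) = 10 * B / \<rho>" by simp
  finally show ?thesis using eta_le by (simp add: add_divide_distrib[symmetric])
qed



lemma numeric1:
  fixes CE c' L m s a b Pu Pv C1 C \<rho> :: real
  assumes CE: "0 < CE" and c: "0 < c'" and L: "0 \<le> L" and m: "0 < m" and s: "1 \<le> s"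
    and ab: "0 \<le> a + b" "a + b \<le> 2 * s" and Pu: "0 < Pu" and Pv: "0 < Pv" and C1: "0 < C1"
    and hyp: "C1 * (s * inverse Pu * inverse Pv * L) \<le> m"
    and C1C: "C / \<rho>^2 \<le> C1" and C: "10000 * (CE^2 * (2 + c')) \<le> C" and rho: "0 < \<rho>"
  shows "CE * sqrt (((a + b) * L + c' * L) / m) \<le> \<rho> * sqrt Pu * sqrt Pv / 100"
proof -
  define X where "X = ((a + b) * L + c' * L) / m"
  have X0: "0 \<le> X" unfolding X_def using ab L c m by (intro divide_nonneg_pos) auto
  have "(a + b) * L + c' * L \<le> (2 + c') * (s * L)"
  proof -
    have "(a + b) * L \<le> (2 * s) * L" using ab L by (intro mult_right_mono) auto
    moreover have "c' * L \<le> c' * (s * L)" using c L s by (intro mult_left_mono) (auto simp: mult_le_cancel_right1)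
    ultimately show ?thesis by (simp add: algebra_simps)
  qed
  hence X1: "X \<le> (2 + c') * (s * L / m)" unfolding X_def using m by (simp add: divide_right_mono)
  have "s * L * (inverse Pu * inverse Pv) \<le> m / C1" using hyp C1 by (simp add: field_simps)
  hence "s * L \<le> m / C1 * (Pu * Pv)" using Pu Pv by (simp add: field_simps)
  hence "s * L / m \<le> Pu * Pv / C1" using m C1 by (simp add: field_simps)
  also have "\<dots> \<le> Pu * Pv * \<rho>^2 / C"
  proof -
    have Cpos: "0 < C" using C CE c by (smt (verit) mult_pos_pos zero_less_power)
    have "1 / C1 \<le> \<rho>^2 / C" using C1C C1 Cpos rho by (simp add: field_simps)
    thus ?thesis using Pu Pv by (simp add: divide_inverse mult_left_mono mult.assoc)
  qed
  finally have X2: "X \<le> (2 + c') * (Pu * Pv * \<rho>^2 / C)" using X1 c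
    by (smt (verit) mult_left_mono)
  have "CE^2 * X \<le> CE^2 * ((2 + c') * (Pu * Pv * \<rho>^2 / C))" using X2 by (intro mult_left_mono) auto
  also have "\<dots> = (CE^2 * (2 + c')) / C * (Pu * Pv * \<rho>^2)" by (simp add: field_simps)
  also have "\<dots> \<le> (1 / 10000) * (Pu * Pv * \<rho>^2)"
  proof (rule mult_right_mono)
    have Cpos: "0 < C" using C CE c by (smt (verit) mult_pos_pos zero_less_power)
    show "CE\<^sup>2 * (2 + c') / C \<le> 1 / 10000" using C Cpos by (simp add: field_simps)
  qed (use Pu Pv in simp)
  finally have sq: "CE^2 * X \<le> (\<rho> * sqrt Pu * sqrt Pv / 100)^2"
    using Pu Pv by (simp add: power_mult_distrib power_divide mult_ac)
  have "sqrt (CE^2 * X) \<le> \<rho> * sqrt Pu * sqrt Pv / 100"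
    by (rule real_le_lsqrt[OF _ sq]) (use rho Pu Pv in simp)
  thus ?thesis unfolding X_def[symmetric] using CE by (simp add: real_sqrt_mult)
qed

lemma numeric2:
  fixes CE c' L m s a b :: real
  assumes CE: "0 < CE" and c: "0 < c'" and L: "0 \<le> L" and m: "0 < m" and s: "1 \<le> s"
    and ab: "0 \<le> a + b" "a + b \<le> s"
  shows "CE * sqrt (((a + b) * L + c' * L) / m) \<le> CE * sqrt (2 + c') * sqrt (s * L / m)"
proof -
  have "(a + b) * L + c' * L \<le> (2 + c') * (s * L)"
  proof -
    have "(a + b) * L \<le> (2 * s) * L" using ab s L by (intro mult_right_mono) auto
    moreover have "c' * L \<le> c' * (s * L)" using c L s by (intro mult_left_mono) (auto simp: mult_le_cancel_right1)
    ultimately show ?thesis by (simp add: algebra_simps)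
  qed
  hence "((a + b) * L + c' * L) / m \<le> (2 + c') * (s * L / m)" using m by (simp add: divide_right_mono)
  hence "sqrt (((a + b) * L + c' * L) / m) \<le> sqrt (2 + c') * sqrt (s * L / m)"
    by (metis real_sqrt_le_mono real_sqrt_mult)
  thus ?thesis using CE by (simp add: mult.assoc mult_left_mono)
qed



lemma both_sides:
  fixes n ku kv K i0 j0 :: nat and \<rho> B :: real and u v :: "nat \<Rightarrow> real"
    and M W :: "nat \<Rightarrow> nat \<Rightarrow> real" and Su Sv :: "nat \<Rightarrow> nat set"
    and uh vh :: "nat \<Rightarrow> nat \<Rightarrow> real" and \<sigma> :: "nat \<Rightarrow> real"
    and E :: "nat \<Rightarrow> nat \<Rightarrow> real" and Pu Pv :: "nat \<Rightarrow> real"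
  assumes Kdef: "K = max ku kv" and rho: "0 < \<rho>"
    and u1: "(\<Sum>i<n. (u i)^2) = 1" and v1: "(\<Sum>i<n. (v i)^2) = 1"
    and su: "card {i. i < n \<and> u i \<noteq> 0} \<le> ku" and sv: "card {i. i < n \<and> v i \<noteq> 0} \<le> kv"
    and dec: "\<forall>i j. M i j = \<rho> * u i * v j + W i j"
    and NW: "\<And>X Y. X \<subseteq> {..<n} \<Longrightarrow> Y \<subseteq> {..<n} \<Longrightarrow> card X \<le> ku \<Longrightarrow> card Y \<le> kv \<Longrightarrow>
        noise W X Y (E (card X) (card Y))"
    and NWT: "\<And>X Y. X \<subseteq> {..<n} \<Longrightarrow> Y \<subseteq> {..<n} \<Longrightarrow> card X \<le> ku \<Longrightarrow> card Y \<le> kv \<Longrightarrow>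
        noise (TT W) Y X (E (card X) (card Y))"
    and PuE: "\<And>k. \<exists>T. T \<subseteq> {..<n} \<and> card T \<le> k \<and> Pu k \<le> (\<Sum>i\<in>T. (u i)^2)"
    and PuU: "\<And>k T. T \<subseteq> {..<n} \<Longrightarrow> card T \<le> k \<Longrightarrow> (\<Sum>i\<in>T. (u i)^2) \<le> Pu k"
    and PvE: "\<And>k. \<exists>T. T \<subseteq> {..<n} \<and> card T \<le> k \<and> Pv k \<le> (\<Sum>i\<in>T. (v i)^2)"
    and PvU: "\<And>k T. T \<subseteq> {..<n} \<Longrightarrow> card T \<le> k \<Longrightarrow> (\<Sum>i\<in>T. (v i)^2) \<le> Pv k"
    and N1: "\<And>\<tau> a b. 1 \<le> \<tau> \<Longrightarrow> \<tau> \<le> K \<Longrightarrow> a \<le> 2 * min \<tau> ku \<Longrightarrow> b \<le> 2 * min \<tau> kv \<Longrightarrow>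
        E a b \<le> \<rho> * sqrt (Pu (min \<tau> ku)) * sqrt (Pv (min \<tau> kv)) / 100"
    and N2: "\<And>a b. a \<le> ku \<Longrightarrow> b \<le> kv \<Longrightarrow> E a b \<le> B"
    and i0: "i0 < n" "j0 < n" and mx: "\<forall>i<n. \<forall>j<n. \<bar>M i j\<bar> \<le> \<bar>M i0 j0\<bar>"
    and S0: "Su 0 = {i0}" "Sv 0 = {j0}"
    and LS: "\<And>t. t \<le> K \<Longrightarrow> lsp M (Su t) (Sv t) (uh t) (vh t) (\<sigma> t)"
    and TU: "\<And>t. t < K \<Longrightarrow> top_k_set n (\<lambda>i. \<Sum>j<n. M i j * vh t j) (min (t+1) ku) (Su (Suc t))"
    and TV: "\<And>t. t < K \<Longrightarrow> top_k_set n (\<lambda>j. \<Sum>i<n. M i j * uh t i) (min (t+1) kv) (Sv (Suc t))"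
  shows "sin_angle n (uh K) u \<le> 22 * B / \<rho> \<and> sin_angle n (vh K) v \<le> 22 * B / \<rho>"
proof
  show "sin_angle n (uh K) u \<le> 22 * B / \<rho>"
    by (rule main_abs[OF Kdef rho u1 v1 su sv dec NW NWT PuE PuU PvE PvU N1 N2 i0 mx S0 LS TU TV])
  have K': "K = max kv ku" using Kdef by (simp add: max.commute)
  have decT: "\<forall>i j. TT M i j = \<rho> * v i * u j + TT W i j" using dec unfolding TT_def by (simp add: mult_ac)
  have NW': "noise (TT W) X Y (E (card Y) (card X))"
    if "X \<subseteq> {..<n}" "Y \<subseteq> {..<n}" "card X \<le> kv" "card Y \<le> ku" for X Y
    using NWT[of Y X] that by simp
  have NWT': "noise (TT (TT W)) Y X (E (card Y) (card X))"
    if "X \<subseteq> {..<n}" "Y \<subseteq> {..<n}" "card X \<le> kv" "card Y \<le> ku" for X Y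
    using NW[of Y X] that by simp
  have N1': "E b a \<le> \<rho> * sqrt (Pv (min \<tau> kv)) * sqrt (Pu (min \<tau> ku)) / 100"
    if "1 \<le> \<tau>" "\<tau> \<le> K" "a \<le> 2 * min \<tau> kv" "b \<le> 2 * min \<tau> ku" for \<tau> a b
    using N1[of \<tau> b a] that by (simp add: mult_ac)
  have N2': "E b a \<le> B" if "a \<le> kv" "b \<le> ku" for a b using N2[of b a] that by simp
  have mx': "\<forall>i<n. \<forall>j<n. \<bar>TT M i j\<bar> \<le> \<bar>TT M j0 i0\<bar>" using mx unfolding TT_def by simp
  have LS': "lsp (TT M) (Sv t) (Su t) (vh t) (uh t) (\<sigma> t)" if "t \<le> K" for t
    using lsp_T[OF LS[OF that]] .
  have TU': "top_k_set n (\<lambda>i. \<Sum>j<n. TT M i j * uh t j) (min (t+1) kv) (Sv (Suc t))" if "t < K" for t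
    using TV[OF that] unfolding TT_def by simp
  have TV': "top_k_set n (\<lambda>j. \<Sum>i<n. TT M i j * vh t i) (min (t+1) ku) (Su (Suc t))" if "t < K" for t
    using TU[OF that] unfolding TT_def by simp
  show "sin_angle n (vh K) v \<le> 22 * B / \<rho>"
    by (rule main_abs[where E="\<lambda>a b. E b a", OF K' rho v1 u1 sv su decT NW' NWT' PvE PvU PuE PuU N1' N2'
          i0(2) i0(1) mx' S0(2) S0(1) LS' TU' TV'])
qed



theorem theorem1:
  shows "\<forall>CE>0. \<forall>c'>0. \<exists>C>0. \<forall>(n::nat) (m::nat) (xs::nat \<Rightarrow> nat \<Rightarrow> real)
      (ys::nat \<Rightarrow> nat \<Rightarrow> real) (\<rho>::real) (u::nat \<Rightarrow> real) (v::nat \<Rightarrow> real)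
      (ku::nat) (kv::nat) (\<gamma>::real) (Su::nat \<Rightarrow> nat set) (Sv::nat \<Rightarrow> nat set)
      (uh::nat \<Rightarrow> nat \<Rightarrow> real) (vh::nat \<Rightarrow> nat \<Rightarrow> real).
     n \<ge> 1 \<longrightarrow> m \<ge> 1 \<longrightarrow>
     0 < \<rho> \<longrightarrow> \<rho> < 1 \<longrightarrow>
     vnorm n u = 1 \<longrightarrow> vnorm n v = 1 \<longrightarrow>
     l0norm n u \<le> ku \<longrightarrow> l0norm n v \<le> kv \<longrightarrow>
     event_E CE c' n m ku kv (\<lambda>i j. sample_cov n m xs ys i j - \<rho> * u i * v j) \<longrightarrow>
     0 < \<gamma> \<longrightarrow> \<gamma> < 1 \<longrightarrow>
     bisep_run n (sample_cov n m xs ys) ku kv Su Sv uh vh \<longrightarrow>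
     (let kmax = max ku kv;
          C1 = C * (1 + \<rho>)\<^sup>2 / (\<rho>\<^sup>2 * \<gamma>\<^sup>2 * (1 - sqrt \<gamma>)\<^sup>2);
          C2 = C * (1 + \<rho>) / (\<rho> * \<gamma>);
          bound = sqrt (1 - \<gamma>) + C2 * sqrt ((real ku + real kv) * ln (real n) / real m)
      in real m \<ge> C1 * Max ((\<lambda>t. (real (min t ku) + real (min t kv))
                                  * struct_fun n u (min t ku) * struct_fun n v (min t kv)
                                  * ln (real n)) ` {1..kmax})
         \<longrightarrow> sin_angle n (uh kmax) u \<le> bound \<and> sin_angle n (vh kmax) v \<le> bound)"
proof (intro allI impI)
  fix CE c' :: real assume CE: "0 < CE" and c: "0 < c'"
  define \<Lambda> where "\<Lambda> = CE * sqrt (2 + c')"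
  define C where "C = 10000 * (\<Lambda> + 1)^2"
  have L0: "0 \<le> \<Lambda>" unfolding \<Lambda>_def using CE c by simp
  have Cpos: "0 < C" unfolding C_def using L0 by simp
  have CL: "10000 * (CE^2 * (2 + c')) \<le> C"
  proof -
    have "CE^2 * (2 + c') = \<Lambda>^2" unfolding \<Lambda>_def using c by (simp add: power_mult_distrib)
    moreover have "\<Lambda>^2 \<le> (\<Lambda> + 1)^2" using L0 by (intro power_mono) auto
    ultimately show ?thesis unfolding C_def by simp
  qed
  have C22: "22 * \<Lambda> \<le> C"
  proof -
    have "\<Lambda> + 1 \<le> (\<Lambda> + 1)^2" using L0 by (simp add: power2_eq_square)
    thus ?thesis unfolding C_def using L0 by linarith
  qed
  show "\<exists>C>0. \<forall>(n::nat) (m::nat) (xs::nat \<Rightarrow> nat \<Rightarrow> real)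
      (ys::nat \<Rightarrow> nat \<Rightarrow> real) (\<rho>::real) (u::nat \<Rightarrow> real) (v::nat \<Rightarrow> real)
      (ku::nat) (kv::nat) (\<gamma>::real) (Su::nat \<Rightarrow> nat set) (Sv::nat \<Rightarrow> nat set)
      (uh::nat \<Rightarrow> nat \<Rightarrow> real) (vh::nat \<Rightarrow> nat \<Rightarrow> real).
     n \<ge> 1 \<longrightarrow> m \<ge> 1 \<longrightarrow>
     0 < \<rho> \<longrightarrow> \<rho> < 1 \<longrightarrow>
     vnorm n u = 1 \<longrightarrow> vnorm n v = 1 \<longrightarrow>
     l0norm n u \<le> ku \<longrightarrow> l0norm n v \<le> kv \<longrightarrow>
     event_E CE c' n m ku kv (\<lambda>i j. sample_cov n m xs ys i j - \<rho> * u i * v j) \<longrightarrow>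
     0 < \<gamma> \<longrightarrow> \<gamma> < 1 \<longrightarrow>
     bisep_run n (sample_cov n m xs ys) ku kv Su Sv uh vh \<longrightarrow>
     (let kmax = max ku kv;
          C1 = C * (1 + \<rho>)\<^sup>2 / (\<rho>\<^sup>2 * \<gamma>\<^sup>2 * (1 - sqrt \<gamma>)\<^sup>2);
          C2 = C * (1 + \<rho>) / (\<rho> * \<gamma>);
          bound = sqrt (1 - \<gamma>) + C2 * sqrt ((real ku + real kv) * ln (real n) / real m)
      in real m \<ge> C1 * Max ((\<lambda>t. (real (min t ku) + real (min t kv))
                                  * struct_fun n u (min t ku) * struct_fun n v (min t kv)
                                  * ln (real n)) ` {1..kmax})
         \<longrightarrow> sin_angle n (uh kmax) u \<le> bound \<and> sin_angle n (vh kmax) v \<le> bound)"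
  proof (intro exI[of _ C] conjI Cpos allI impI)
    fix n m :: nat and xs ys :: "nat \<Rightarrow> nat \<Rightarrow> real" and \<rho> :: real and u v :: "nat \<Rightarrow> real"
      and ku kv :: nat and \<gamma> :: real and Su Sv :: "nat \<Rightarrow> nat set" and uh vh :: "nat \<Rightarrow> nat \<Rightarrow> real"
    assume n1: "n \<ge> 1" and m1: "m \<ge> 1" and rho: "0 < \<rho>" "\<rho> < 1"
      and vu: "vnorm n u = 1" and vv: "vnorm n v = 1"
      and l0u: "l0norm n u \<le> ku" and l0v: "l0norm n v \<le> kv"
      and ev0: "event_E CE c' n m ku kv (\<lambda>i j. sample_cov n m xs ys i j - \<rho> * u i * v j)"
      and g: "0 < \<gamma>" "\<gamma> < 1"
      and run: "bisep_run n (sample_cov n m xs ys) ku kv Su Sv uh vh"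
    define K where "K = max ku kv"
    define C1 where "C1 = C * (1 + \<rho>)\<^sup>2 / (\<rho>\<^sup>2 * \<gamma>\<^sup>2 * (1 - sqrt \<gamma>)\<^sup>2)"
    define C2 where "C2 = C * (1 + \<rho>) / (\<rho> * \<gamma>)"
    define f where "f = (\<lambda>t. (real (min t ku) + real (min t kv))
                                  * struct_fun n u (min t ku) * struct_fun n v (min t kv)
                                  * ln (real n))"
    define Q where "Q = sqrt ((real ku + real kv) * ln (real n) / real m)"
    show "let kmax = max ku kv;
          C1 = C * (1 + \<rho>)\<^sup>2 / (\<rho>\<^sup>2 * \<gamma>\<^sup>2 * (1 - sqrt \<gamma>)\<^sup>2);
          C2 = C * (1 + \<rho>) / (\<rho> * \<gamma>);
          bound = sqrt (1 - \<gamma>) + C2 * sqrt ((real ku + real kv) * ln (real n) / real m)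
      in real m \<ge> C1 * Max ((\<lambda>t. (real (min t ku) + real (min t kv))
                                  * struct_fun n u (min t ku) * struct_fun n v (min t kv)
                                  * ln (real n)) ` {1..kmax})
         \<longrightarrow> sin_angle n (uh kmax) u \<le> bound \<and> sin_angle n (vh kmax) v \<le> bound"
      unfolding Let_def K_def[symmetric] C1_def[symmetric] C2_def[symmetric] f_def[symmetric] Q_def[symmetric]
    proof (intro impI)
      assume hyp: "C1 * Max (f ` {1..K}) \<le> real m"
      define M where "M = sample_cov n m xs ys"
      define W where "W = (\<lambda>i j. M i j - \<rho> * u i * v j)"
      define E where "E = (\<lambda>a b::nat. CE * sqrt (((real a + real b) * ln (real n) + c' * ln (real n)) / real m))"
      define B where "B = \<Lambda> * Q"
      define Pu where "Pu = Ptop n u"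
      define Pv where "Pv = Ptop n v"
      have ev: "event_E CE c' n m ku kv W" using ev0 unfolding W_def M_def .
      have u1: "(\<Sum>i<n. (u i)^2) = 1" using vu unfolding vnorm_def by simp
      have v1: "(\<Sum>i<n. (v i)^2) = 1" using vv unfolding vnorm_def by simp
      have su: "card {i. i < n \<and> u i \<noteq> 0} \<le> ku" using l0u unfolding l0norm_def .
      have sv: "card {i. i < n \<and> v i \<noteq> 0} \<le> kv" using l0v unfolding l0norm_def .
      have dec: "\<forall>i j. M i j = \<rho> * u i * v j + W i j" unfolding W_def by simp
      have NW: "noise W X Y (E (card X) (card Y))"
        if X: "X \<subseteq> {..<n}" "Y \<subseteq> {..<n}" "card X \<le> ku" "card Y \<le> kv" for X Y
        unfolding noise_def
      proof (intro allI impI)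
        fix b :: "nat \<Rightarrow> real" assume b: "(\<Sum>j\<in>Y. (b j)^2) \<le> 1"
        have fX: "finite X" "finite Y" using X finite_subset by blast+
        have "L2_set (Mv W Y b) X \<le> spec_norm_sub W X Y" by (rule spec_upper[OF fX b])
        also have "\<dots> \<le> E (card X) (card Y)" using ev X unfolding event_E_def E_def by blast
        finally show "L2_set (Mv W Y b) X \<le> E (card X) (card Y)" .
      qed
      have NWT: "noise (TT W) Y X (E (card X) (card Y))"
        if X: "X \<subseteq> {..<n}" "Y \<subseteq> {..<n}" "card X \<le> ku" "card Y \<le> kv" for X Y
        using noise_T[OF _ _ NW[OF X]] X finite_subset by blast
      have PuE: "\<exists>T. T \<subseteq> {..<n} \<and> card T \<le> k \<and> Pu k \<le> (\<Sum>i\<in>T. (u i)^2)" for k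
      proof -
        obtain T where "T \<subseteq> {..<n}" "card T \<le> k" "Ptop n u k = (\<Sum>i\<in>T. (u i)^2)"
          using Ptop_props(1)[of n k u] by blast
        thus ?thesis unfolding Pu_def by auto
      qed
      have PuU: "(\<Sum>i\<in>T. (u i)^2) \<le> Pu k" if "T \<subseteq> {..<n}" "card T \<le> k" for k T
        using Ptop_props(2)[OF that] unfolding Pu_def .
      have PvE: "\<exists>T. T \<subseteq> {..<n} \<and> card T \<le> k \<and> Pv k \<le> (\<Sum>i\<in>T. (v i)^2)" for k
      proof -
        obtain T where "T \<subseteq> {..<n}" "card T \<le> k" "Ptop n v k = (\<Sum>i\<in>T. (v i)^2)"
          using Ptop_props(1)[of n k v] by blast
        thus ?thesis unfolding Pv_def by auto
      qed
      have PvU: "(\<Sum>i\<in>T. (v i)^2) \<le> Pv k" if "T \<subseteq> {..<n}" "card T \<le> k" for k T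
        using Ptop_props(2)[OF that] unfolding Pv_def .
      note PF = P_facts[OF u1 su PuE PuU] and QF = P_facts[OF v1 sv PvE PvU]
      have Lpos: "0 \<le> ln (real n)" using n1 by simp
      have mpos: "0 < real m" using m1 by simp
      have Dpos: "0 < \<gamma>\<^sup>2 * (1 - sqrt \<gamma>)\<^sup>2" using g by (simp add: real_sqrt_less_iff)
      have D1: "\<gamma>\<^sup>2 * (1 - sqrt \<gamma>)\<^sup>2 \<le> 1"
      proof -
        have "\<gamma>\<^sup>2 \<le> 1" using g by (simp add: power_le_one)
        moreover have "(1 - sqrt \<gamma>)\<^sup>2 \<le> 1" using g by (intro power_le_one) (auto simp: real_sqrt_le_iff)
        ultimately show ?thesis using Dpos by (metis mult_le_one zero_le_power2)
      qed
      have C1pos: "0 < C1" unfolding C1_def using Cpos rho Dpos by (simp add: mult.assoc)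
      have C1C: "C / \<rho>^2 \<le> C1"
      proof -
        have "C / \<rho>^2 \<le> C * (1 + \<rho>)\<^sup>2 / (\<rho>\<^sup>2 * (\<gamma>\<^sup>2 * (1 - sqrt \<gamma>)\<^sup>2))"
        proof (rule frac_le)
          show "C \<le> C * (1 + \<rho>)\<^sup>2" using Cpos rho by (simp add: power2_eq_square algebra_simps)
          show "0 < \<rho>\<^sup>2 * (\<gamma>\<^sup>2 * (1 - sqrt \<gamma>)\<^sup>2)" using rho Dpos by simp
          show "\<rho>\<^sup>2 * (\<gamma>\<^sup>2 * (1 - sqrt \<gamma>)\<^sup>2) \<le> \<rho>\<^sup>2" using D1 rho by (simp add: mult_left_le)
        qed (use Cpos in simp)
        thus ?thesis unfolding C1_def by (simp add: mult.assoc)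
      qed
      have N1: "E a b \<le> \<rho> * sqrt (Pu (min \<tau> ku)) * sqrt (Pv (min \<tau> kv)) / 100"
        if t: "1 \<le> \<tau>" "\<tau> \<le> K" "a \<le> 2 * min \<tau> ku" "b \<le> 2 * min \<tau> kv" for \<tau> a b
      proof -
        have fin: "finite (f ` {1..K})" by simp
        have "f \<tau> \<le> Max (f ` {1..K})" using t fin by (intro Max_ge) auto
        hence "C1 * f \<tau> \<le> C1 * Max (f ` {1..K})" using C1pos by (intro mult_left_mono) auto
        hence "C1 * f \<tau> \<le> real m" using hyp by linarith
        hence h: "C1 * ((real (min \<tau> ku) + real (min \<tau> kv)) * inverse (Pu (min \<tau> ku)) * inverse (Pv (min \<tau> kv)) * ln (real n)) \<le> real m"
          unfolding f_def struct_fun_Ptop Pu_def Pv_def .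
        have s1: "1 \<le> real (min \<tau> ku) + real (min \<tau> kv)" using t PF(1) by simp
        have ab: "real a + real b \<le> 2 * (real (min \<tau> ku) + real (min \<tau> kv))" using t by simp
        have "1 \<le> min \<tau> ku" "1 \<le> min \<tau> kv" using t PF(1) QF(1) by auto
        hence pp: "0 < Pu (min \<tau> ku)" "0 < Pv (min \<tau> kv)" using PF(5) QF(5) by auto
        show ?thesis unfolding E_def
          by (rule numeric1[OF CE c Lpos mpos s1 _ ab pp C1pos h C1C CL rho(1)]) simp
      qed
      have N2: "E a b \<le> B" if "a \<le> ku" "b \<le> kv" for a b
      proof -
        have s1: "1 \<le> real ku + real kv" using PF(1) by simp
        have ab: "real a + real b \<le> real ku + real kv" using that by simp
        show ?thesis unfolding E_def B_def Q_def \<Lambda>_def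
          by (rule numeric2[OF CE c Lpos mpos s1 _ ab]) simp
      qed
      obtain i0 j0 where i0: "i0 < n" "j0 < n" and mx: "\<forall>i<n. \<forall>j<n. \<bar>M i j\<bar> \<le> \<bar>M i0 j0\<bar>"
        and S0: "Su 0 = {i0}" "Sv 0 = {j0}"
        and LSP: "\<forall>t \<le> K. leading_sing_pair M (Su t) (Sv t) (uh t) (vh t)"
        and TOP: "\<forall>t < K. top_k_set n (\<lambda>i. \<Sum>j<n. M i j * vh t j) (min (t + 1) ku) (Su (Suc t)) \<and>
           top_k_set n (\<lambda>j. \<Sum>i<n. M i j * uh t i) (min (t + 1) kv) (Sv (Suc t))"
      proof -
        have runD: "(\<exists>i0 j0. i0 < n \<and> j0 < n \<and> (\<forall>i<n. \<forall>j<n. \<bar>M i j\<bar> \<le> \<bar>M i0 j0\<bar>) \<and>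
            Su 0 = {i0} \<and> Sv 0 = {j0}) \<and>
          (\<forall>t \<le> K. leading_sing_pair M (Su t) (Sv t) (uh t) (vh t)) \<and>
          (\<forall>t < K. top_k_set n (\<lambda>i. \<Sum>j<n. M i j * vh t j) (min (t + 1) ku) (Su (Suc t)) \<and>
           top_k_set n (\<lambda>j. \<Sum>i<n. M i j * uh t i) (min (t + 1) kv) (Sv (Suc t)))"
          using run unfolding bisep_run_def M_def[symmetric] K_def[symmetric] .
        from runD have e1: "\<exists>i0 j0. i0 < n \<and> j0 < n \<and> (\<forall>i<n. \<forall>j<n. \<bar>M i j\<bar> \<le> \<bar>M i0 j0\<bar>) \<and>
            Su 0 = {i0} \<and> Sv 0 = {j0}" by (rule conjunct1)
        from runD have e2: "(\<forall>t \<le> K. leading_sing_pair M (Su t) (Sv t) (uh t) (vh t)) \<and>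
          (\<forall>t < K. top_k_set n (\<lambda>i. \<Sum>j<n. M i j * vh t j) (min (t + 1) ku) (Su (Suc t)) \<and>
           top_k_set n (\<lambda>j. \<Sum>i<n. M i j * uh t i) (min (t + 1) kv) (Sv (Suc t)))" by (rule conjunct2)
        from e1 obtain i0 j0 where "i0 < n \<and> j0 < n \<and> (\<forall>i<n. \<forall>j<n. \<bar>M i j\<bar> \<le> \<bar>M i0 j0\<bar>) \<and>
            Su 0 = {i0} \<and> Sv 0 = {j0}" by (elim exE)
        with e2 show ?thesis using that by (elim conjE) assumption
      qed
      have finS: "finite (Su t) \<and> finite (Sv t)" if "t \<le> K" for t
      proof (cases t)
        case 0 thus ?thesis using S0 by simp
      next
        case (Suc t')
        hence "t' < K" using that by simp
        hence "Su t \<subseteq> {..<n}" "Sv t \<subseteq> {..<n}" using TOP Suc unfolding top_k_set_def by auto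
        thus ?thesis using finite_subset by blast
      qed
      have LS: "lsp M (Su t) (Sv t) (uh t) (vh t) (spec_norm_sub M (Su t) (Sv t))" if "t \<le> K" for t
      proof -
        have "leading_sing_pair M (Su t) (Sv t) (uh t) (vh t)" using LSP that by simp
        thus ?thesis using finS[OF that] by (intro lsp_of_leading) auto
      qed
      have TU: "top_k_set n (\<lambda>i. \<Sum>j<n. M i j * vh t j) (min (t+1) ku) (Su (Suc t))" if "t < K" for t
        using TOP that by simp
      have TV: "top_k_set n (\<lambda>j. \<Sum>i<n. M i j * uh t i) (min (t+1) kv) (Sv (Suc t))" if "t < K" for t
        using TOP that by simp
      have both: "sin_angle n (uh K) u \<le> 22 * B / \<rho> \<and> sin_angle n (vh K) v \<le> 22 * B / \<rho>"
        by (rule both_sides[where E=E and \<sigma>="\<lambda>t. spec_norm_sub M (Su t) (Sv t)",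
              OF K_def rho(1) u1 v1 su sv dec NW NWT PuE PuU PvE PvU N1 N2 i0 mx S0 LS TU TV])
      have fin: "22 * B / \<rho> \<le> sqrt (1 - \<gamma>) + C2 * Q"
      proof -
        have Q0: "0 \<le> Q" unfolding Q_def
          by (intro real_sqrt_ge_zero divide_nonneg_nonneg mult_nonneg_nonneg) (use Lpos in auto)
        have "C / \<rho> \<le> C2" unfolding C2_def
        proof (rule frac_le)
          show "C \<le> C * (1 + \<rho>)" using Cpos rho by simp
          show "0 < \<rho> * \<gamma>" using rho g by simp
          show "\<rho> * \<gamma> \<le> \<rho>" using rho g by (simp add: mult_left_le)
        qed (use Cpos rho in simp)
        hence "C / \<rho> * Q \<le> C2 * Q" using Q0 by (rule mult_right_mono)
        moreover have "22 * B / \<rho> \<le> C / \<rho> * Q"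
        proof -
          have "22 * \<Lambda> * Q \<le> C * Q" using C22 Q0 by (rule mult_right_mono)
          hence "22 * \<Lambda> * Q / \<rho> \<le> C * Q / \<rho>" using rho by (simp add: divide_right_mono)
          thus ?thesis unfolding B_def by (simp add: mult.assoc)
        qed
        moreover have "0 \<le> sqrt (1 - \<gamma>)" using g by simp
        ultimately show ?thesis by linarith
      qed
      show "sin_angle n (uh K) u \<le> sqrt (1 - \<gamma>) + C2 * Q \<and> sin_angle n (vh K) v \<le> sqrt (1 - \<gamma>) + C2 * Q"
        using both fin by linarith
    qed
  qed
qed


end
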